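(* Consider the broadcast tree model with parameters $k\ge2$ and $\theta\in[-1,1]$, and $n=k^d$. If $\theta$ is dyadic, $\theta=a/2^b$ for integers $a,b$, then there exists a family of generation functions computable by $\mathbf{AC}^0$ circuits. Moreover, for every $\theta$ and every constant $c>0$ there exists a family of $2^{-n^c}$-approximate-generation functions computable by $\mathbf{AC}^0$ circuits.
   Context: Broadcast (Ising) tree model: complete $k$-ary tree of depth $d$ with root $\rho$; $L_r$ = vertices at depth $r$; $\sigma_\rho$ uniform on $\{0,1\}$; each child $v$ of $u$ independently has $\sigma_v=\sigma_u$ with probability $(1+\theta)/2$ and $1-\sigma_u$ otherwise; $X^{(d)}=(\sigma_v)_{v\in L_d}$. A family $f_d:\{0,1\}^{m(d)}\to\{0,1\}^{L_d}$ is a family of generation functions if, for uniformly random input, $f_d$'s output has exactly the distribution of $X^{(d)}$ for all $d$; it is a family of $(\delta_d)$-approximate-generation functions if the total variation distance between the output distribution and that of $X^{(d)}$ is at most $\delta_d$ for all $d$. $\mathbf{AC}^0$: constant-depth, polynomial-size (in $n$) circuits with NOT and unbounded fan-in AND/OR gates. *)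

theory Defs
  imports "HOL-Probability.Probability"
begin

text \<open>Wires of a circuit with m inputs: wires 0..m-1 are the inputs; the i-th gate
  (0-based) produces wire m+i and may only read wires with smaller index.\<close>

datatype gate = NotG nat | AndG "nat list" | OrG "nat list"

record circuit =
  c_inputs :: nat
  c_gates :: "gate list"
  c_outputs :: "nat list"

fun gate_args :: "gate \<Rightarrow> nat list" where
  "gate_args (NotG i) = [i]"
| "gate_args (AndG is) = is"
| "gate_args (OrG is) = is"

definition wf_circuit :: "circuit \<Rightarrow> bool" where
  "wf_circuit C \<longleftrightarrow>
     (\<forall>i < length (c_gates C). \<forall>j \<in> set (gate_args (c_gates C ! i)). j < c_inputs C + i)
   \<and> (\<forall>j \<in> set (c_outputs C). j < c_inputs C + length (c_gates C))"

fun gate_val :: "gate \<Rightarrow> bool list \<Rightarrow> bool" where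
  "gate_val (NotG i) vs = (\<not> vs ! i)"
| "gate_val (AndG is) vs = (\<forall>j \<in> set is. vs ! j)"
| "gate_val (OrG is) vs = (\<exists>j \<in> set is. vs ! j)"

fun eval_gates :: "gate list \<Rightarrow> bool list \<Rightarrow> bool list" where
  "eval_gates [] vs = vs"
| "eval_gates (g # gs) vs = eval_gates gs (vs @ [gate_val g vs])"

definition circ_eval :: "circuit \<Rightarrow> bool list \<Rightarrow> bool list" where
  "circ_eval C xs = (let vs = eval_gates (c_gates C) xs in map (\<lambda>j. vs ! j) (c_outputs C))"

fun gate_depths :: "gate list \<Rightarrow> nat list \<Rightarrow> nat list" where
  "gate_depths [] ds = ds"
| "gate_depths (g # gs) ds = gate_depths gs (ds @ [Suc (foldr max (map (\<lambda>j. ds ! j) (gate_args g)) 0)])"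

definition circ_depth :: "circuit \<Rightarrow> nat" where
  "circ_depth C = foldr max (gate_depths (c_gates C) (replicate (c_inputs C) 0)) 0"

definition circ_size :: "circuit \<Rightarrow> nat" where
  "circ_size C = c_inputs C + length (c_gates C)"

text \<open>A family (C d) indexed by the tree depth d, with n = k^d, is an AC0 family if it has
  constant depth and size polynomial in n (non-uniform).\<close>
definition AC0_family :: "nat \<Rightarrow> (nat \<Rightarrow> circuit) \<Rightarrow> bool" where
  "AC0_family k C \<longleftrightarrow> (\<exists>D c e::nat. \<forall>d. wf_circuit (C d) \<and> circ_depth (C d) \<le> D
       \<and> circ_size (C d) \<le> c * (k ^ d) ^ e)"

fun seq_pmf :: "'a pmf list \<Rightarrow> 'a list pmf" where
  "seq_pmf [] = return_pmf []"
| "seq_pmf (p # ps) = bind_pmf p (\<lambda>x. bind_pmf (seq_pmf ps) (\<lambda>xs. return_pmf (x # xs)))"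

text \<open>Leaves are listed in lexicographic order of their addresses in {0..k-1}^d.\<close>
fun bcast :: "nat \<Rightarrow> real \<Rightarrow> nat \<Rightarrow> bool \<Rightarrow> bool list pmf" where
  "bcast k \<theta> 0 s = return_pmf [s]"
| "bcast k \<theta> (Suc d) s = map_pmf concat (seq_pmf (replicate k
     (bind_pmf (bernoulli_pmf ((1 + \<theta>) / 2)) (\<lambda>b. bcast k \<theta> d (if b then s else \<not> s)))))"

definition broadcast_leaves :: "nat \<Rightarrow> real \<Rightarrow> nat \<Rightarrow> bool list pmf" where
  "broadcast_leaves k \<theta> d = bind_pmf (bernoulli_pmf (1/2)) (bcast k \<theta> d)"

definition uniform_bits :: "nat \<Rightarrow> bool list pmf" where
  "uniform_bits m = pmf_of_set {xs. length xs = m}"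

definition tv_dist :: "'a pmf \<Rightarrow> 'a pmf \<Rightarrow> real" where
  "tv_dist p q = (SUP A. \<bar>measure_pmf.prob p A - measure_pmf.prob q A\<bar>)"

definition output_dist :: "circuit \<Rightarrow> bool list pmf" where
  "output_dist C = map_pmf (circ_eval C) (uniform_bits (c_inputs C))"

end

theory Submission
  imports Defs
begin


abbreviation coin :: "bool pmf" where "coin \<equiv> bernoulli_pmf (1/2)"

lemma seq_rep: "seq_pmf (replicate n p) = replicate_pmf n p"
  by (induction n) auto

lemma pmf_rep_coin: "pmf (replicate_pmf m coin) xs = (if length xs = m then 1 / 2 ^ m else 0)"
proof (induction m arbitrary: xs)
  case 0
  then show ?case by (cases xs) (auto simp: pmf_return)
next
  case (Suc m)
  have "pmf (replicate_pmf (Suc m) coin) xs =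
     (\<integral>x. pmf (replicate_pmf m coin \<bind> (\<lambda>xs. return_pmf (x # xs))) xs \<partial>coin)"
    by (simp add: pmf_bind)
  also have "\<dots> = (\<integral>x. pmf (map_pmf (\<lambda>ys. x # ys) (replicate_pmf m coin)) xs \<partial>coin)"
    by (simp add: map_pmf_def)
  finally have e: "pmf (replicate_pmf (Suc m) coin) xs = 
     pmf (map_pmf (\<lambda>ys. True # ys) (replicate_pmf m coin)) xs / 2 +
     pmf (map_pmf (\<lambda>ys. False # ys) (replicate_pmf m coin)) xs / 2" by simp
  have inj: "inj (\<lambda>ys. x # ys)" for x :: bool by (auto simp: inj_def)
  show ?case
  proof (cases xs)
    case Nil
    then show ?thesis using e by (simp add: pmf_map vimage_def)
  next
    case (Cons y ys)
    have "pmf (map_pmf (\<lambda>ys. x # ys) (replicate_pmf m coin)) (y # ys) = (if x = y then pmf (replicate_pmf m coin) ys else 0)" for x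
      using pmf_map_inj'[OF inj[of x], of _ ys] by (auto simp: pmf_map vimage_def)
    then show ?thesis using e Cons Suc by auto
  qed
qed

lemma uniform_rep: "uniform_bits m = replicate_pmf m coin"
proof (rule pmf_eqI)
  fix xs :: "bool list"
  have c: "card {xs :: bool list. length xs = m} = 2 ^ m"
    using card_lists_length_eq[of "UNIV :: bool set" m] by simp
  have f: "finite {xs :: bool list. length xs = m}"
    using finite_lists_length_eq[of "UNIV :: bool set" m] by simp
  have ne: "{xs :: bool list. length xs = m} \<noteq> {}" by (auto intro: exI[of _ "replicate m True"])
  show "pmf (uniform_bits m) xs = pmf (replicate_pmf m coin) xs"
    unfolding uniform_bits_def pmf_rep_coin using c f ne by (simp add: pmf_of_set)
qed

lemma rep_mult: "replicate_pmf (k * B) p = map_pmf concat (replicate_pmf k (replicate_pmf B p))"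
proof (induction k)
  case 0
  then show ?case by simp
next
  case (Suc k)
  have "replicate_pmf (Suc k * B) p = replicate_pmf (B + k * B) p" by simp
  also have "\<dots> = replicate_pmf B p \<bind> (\<lambda>xs. replicate_pmf (k * B) p \<bind> (\<lambda>ys. return_pmf (xs @ ys)))"
    by (rule replicate_pmf_distrib)
  also have "\<dots> = map_pmf concat (replicate_pmf (Suc k) (replicate_pmf B p))"
    by (simp add: Suc map_pmf_def bind_assoc_pmf bind_return_pmf)
  finally show ?case .
qed

lemma rep_map: "replicate_pmf n (map_pmf f p) = map_pmf (map f) (replicate_pmf n p)"
  by (induction n) (simp_all add: map_pmf_def bind_assoc_pmf bind_return_pmf)

lemma bool_pmf_eqI:
  fixes M N :: "bool pmf"
  assumes "pmf M True = pmf N True" shows "M = N"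
proof (rule pmf_eqI)
  fix b
  have "pmf P False + pmf P True = 1" for P :: "bool pmf"
  proof -
    have "sum (pmf P) UNIV = 1" by (rule sum_pmf_eq_1) auto
    then show ?thesis by (simp add: UNIV_bool add.commute)
  qed
  from this[of M] this[of N] assms show "pmf M b = pmf N b" by (cases b) auto
qed

lemma pmf_bind_bern:
  assumes "0 \<le> q" "q \<le> 1"
  shows "pmf (bind_pmf (bernoulli_pmf q) f) x = q * pmf (f True) x + (1 - q) * pmf (f False) x"
  using assms by (simp add: pmf_bind)

lemma measure_bind_pmf: "measure_pmf.prob (bind_pmf M f) A = (\<integral>x. measure_pmf.prob (f x) A \<partial>M)"
proof -
  have "emeasure (bind_pmf M f) A = (\<integral>\<^sup>+x. ennreal (measure_pmf.prob (f x) A) \<partial>M)"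
    by (subst emeasure_bind_pmf) (simp add: measure_pmf.emeasure_eq_measure)
  also have "\<dots> = ennreal (\<integral>x. measure_pmf.prob (f x) A \<partial>M)"
    by (rule nn_integral_eq_integral) (auto intro!: measure_pmf.integrable_const_bound[where B=1])
  finally show ?thesis
    by (simp add: measure_pmf.emeasure_eq_measure)
qed



definition close :: "real \<Rightarrow> 'a pmf \<Rightarrow> 'a pmf \<Rightarrow> bool" where
  "close e p q \<longleftrightarrow> (\<forall>A. \<bar>measure_pmf.prob p A - measure_pmf.prob q A\<bar> \<le> e)"

lemma close_map: "close e p q \<Longrightarrow> close e (map_pmf f p) (map_pmf f q)"
  unfolding close_def by simp

lemma prob_diff_le1: "\<bar>measure_pmf.prob p A - measure_pmf.prob q B\<bar> \<le> 1"
  using measure_pmf.prob_le_1[of p A] measure_pmf.prob_le_1[of q B] measure_nonneg[of p A]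
    measure_nonneg[of q B] unfolding abs_le_iff by linarith

lemma close_trans:
  assumes "close e1 p q" "close e2 q r" shows "close (e1 + e2) p r"
  unfolding close_def
proof
  fix A
  have "\<bar>measure_pmf.prob p A - measure_pmf.prob q A\<bar> \<le> e1"
    "\<bar>measure_pmf.prob q A - measure_pmf.prob r A\<bar> \<le> e2" using assms by (auto simp: close_def)
  then show "\<bar>measure_pmf.prob p A - measure_pmf.prob r A\<bar> \<le> e1 + e2" by (simp add: abs_le_iff)
qed

lemma close_bind:
  assumes "\<And>x. close e (f x) (g x)"
  shows "close e (bind_pmf M f) (bind_pmf M g)"
  unfolding close_def
proof
  fix A
  have "\<bar>measure_pmf.prob (bind_pmf M f) A - measure_pmf.prob (bind_pmf M g) A\<bar>
      = \<bar>\<integral>x. measure_pmf.prob (f x) A - measure_pmf.prob (g x) A \<partial>M\<bar>"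
    unfolding measure_bind_pmf
    by (subst Bochner_Integration.integral_diff)
       (auto intro!: measure_pmf.integrable_const_bound[where B=1])
  also have "\<dots> \<le> (\<integral>x. \<bar>measure_pmf.prob (f x) A - measure_pmf.prob (g x) A\<bar> \<partial>M)"
    by (rule integral_abs_bound)
  also have "\<dots> \<le> (\<integral>x. e \<partial>M)"
    using assms unfolding close_def
    by (intro integral_mono) (auto intro!: measure_pmf.integrable_const_bound[where B=1] prob_diff_le1)
  also have "\<dots> = e" by simp
  finally show "\<bar>measure_pmf.prob (bind_pmf M f) A - measure_pmf.prob (bind_pmf M g) A\<bar> \<le> e" .
qed

lemma close_bern:
  assumes "0 \<le> a" "a \<le> 1" "0 \<le> b" "b \<le> 1"
  shows "close \<bar>a - b\<bar> (bind_pmf (bernoulli_pmf a) f) (bind_pmf (bernoulli_pmf b) f)"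
  unfolding close_def
proof
  fix A
  let ?T = "measure_pmf.prob (f True) A" and ?F = "measure_pmf.prob (f False) A"
  have "\<bar>measure_pmf.prob (bind_pmf (bernoulli_pmf a) f) A - measure_pmf.prob (bind_pmf (bernoulli_pmf b) f) A\<bar>
     = \<bar>a - b\<bar> * \<bar>?T - ?F\<bar>"
    using assms unfolding measure_bind_pmf by (simp add: abs_mult[symmetric] algebra_simps)
  also have "\<dots> \<le> \<bar>a - b\<bar> * 1"
    by (intro mult_left_mono prob_diff_le1) auto
  finally show "\<bar>measure_pmf.prob (bind_pmf (bernoulli_pmf a) f) A - measure_pmf.prob (bind_pmf (bernoulli_pmf b) f) A\<bar> \<le> \<bar>a - b\<bar>" by simp
qed

lemma close_rep:
  assumes "close e p q"
  shows "close (real n * e) (replicate_pmf n p) (replicate_pmf n q)"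
proof (induction n)
  case 0
  then show ?case by (simp add: close_def)
next
  case (Suc n)
  have 1: "close (real n * e) (replicate_pmf (Suc n) p)
      (bind_pmf p (\<lambda>x. map_pmf (\<lambda>xs. x # xs) (replicate_pmf n q)))"
    unfolding replicate_pmf.simps map_pmf_def[symmetric]
    by (intro close_bind close_map Suc)
  have "bind_pmf p (\<lambda>x. map_pmf (\<lambda>xs. x # xs) (replicate_pmf n q))
      = bind_pmf (replicate_pmf n q) (\<lambda>xs. map_pmf (\<lambda>x. x # xs) p)"
    unfolding map_pmf_def by (rule bind_commute_pmf)
  moreover have "bind_pmf q (\<lambda>x. map_pmf (\<lambda>xs. x # xs) (replicate_pmf n q))
      = bind_pmf (replicate_pmf n q) (\<lambda>xs. map_pmf (\<lambda>x. x # xs) q)"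
    unfolding map_pmf_def by (rule bind_commute_pmf)
  ultimately have 2: "close e (bind_pmf p (\<lambda>x. map_pmf (\<lambda>xs. x # xs) (replicate_pmf n q)))
      (replicate_pmf (Suc n) q)"
    unfolding replicate_pmf.simps map_pmf_def[symmetric]
    by (simp only:) (intro close_bind close_map assms)
  from close_trans[OF 1 2] show ?case by (simp add: algebra_simps)
qed

fun eb :: "nat \<Rightarrow> real \<Rightarrow> nat \<Rightarrow> real" where
  "eb k \<delta> 0 = 0"
| "eb k \<delta> (Suc d) = real k * (\<delta> + eb k \<delta> d)"

lemma close_bcast:
  assumes "-1 \<le> t1" "t1 \<le> 1" "-1 \<le> t2" "t2 \<le> 1"
  shows "close (eb k (\<bar>t1 - t2\<bar> / 2) d) (bcast k t1 d s) (bcast k t2 d s)"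
proof (induction d arbitrary: s)
  case 0
  then show ?case by (simp add: close_def)
next
  case (Suc d)
  let ?Q = "\<lambda>t t'. bind_pmf (bernoulli_pmf ((1 + t) / 2)) (\<lambda>b. bcast k t' d (if b then s else \<not> s))"
  have a: "close (eb k (\<bar>t1 - t2\<bar> / 2) d) (?Q t1 t1) (?Q t1 t2)"
    by (intro close_bind Suc)
  have b: "close \<bar>(1 + t1) / 2 - (1 + t2) / 2\<bar> (?Q t1 t2) (?Q t2 t2)"
    using assms by (intro close_bern) auto
  have "(1 + t1) / 2 - (1 + t2) / 2 = (t1 - t2) / 2" by (simp add: field_simps)
  then have "\<bar>(1 + t1) / 2 - (1 + t2) / 2\<bar> = \<bar>(t1 - t2) / 2\<bar>" by (simp only:)
  then have "\<bar>(1 + t1) / 2 - (1 + t2) / 2\<bar> = \<bar>t1 - t2\<bar> / 2" by simp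
  with close_trans[OF a b] have "close (\<bar>t1 - t2\<bar> / 2 + eb k (\<bar>t1 - t2\<bar> / 2) d) (?Q t1 t1) (?Q t2 t2)"
    by (simp add: add.commute)
  from close_map[OF close_rep[OF this, of k], of concat]
  show ?case by (simp add: seq_rep)
qed

lemma eb_bound: "\<delta> \<ge> 0 \<Longrightarrow> k \<ge> 1 \<Longrightarrow> eb k \<delta> d \<le> \<delta> * real d * real k ^ d"
proof (induction d)
  case 0
  then show ?case by simp
next
  case (Suc d)
  have "real k ^ 1 \<le> real k ^ Suc d" using Suc.prems by (intro power_increasing) auto
  then have "real k \<le> real k ^ Suc d" by simp
  have "eb k \<delta> (Suc d) = real k * \<delta> + real k * eb k \<delta> d" by (simp add: algebra_simps)
  also have "\<dots> \<le> \<delta> * real k ^ Suc d + real k * (\<delta> * real d * real k ^ d)"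
  proof (rule add_mono)
    show "real k * \<delta> \<le> \<delta> * real k ^ Suc d"
      using \<open>real k \<le> real k ^ Suc d\<close> Suc.prems(1) by (metis mult.commute mult_left_mono)
    show "real k * eb k \<delta> d \<le> real k * (\<delta> * real d * real k ^ d)"
      using Suc by (intro mult_left_mono) auto
  qed
  also have "\<dots> = \<delta> * real (Suc d) * real k ^ Suc d" by (simp add: algebra_simps)
  finally show ?case .
qed

lemma close_tv: "close e p q \<Longrightarrow> tv_dist p q \<le> e"
  unfolding tv_dist_def close_def by (intro cSUP_least) auto



datatype form = FV nat | FN form | FA "form list" | FO "form list"

fun feval :: "form \<Rightarrow> bool list \<Rightarrow> bool" where
  "feval (FV i) xs = xs ! i"
| "feval (FN f) xs = (\<not> feval f xs)"
| "feval (FA fs) xs = (\<forall>f\<in>set fs. feval f xs)"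
| "feval (FO fs) xs = (\<exists>f\<in>set fs. feval f xs)"

fun fbd :: "nat \<Rightarrow> form \<Rightarrow> bool" where
  "fbd D (FV i) = True"
| "fbd D (FN f) = (0 < D \<and> fbd (D - 1) f)"
| "fbd D (FA fs) = (0 < D \<and> (\<forall>f\<in>set fs. fbd (D - 1) f))"
| "fbd D (FO fs) = (0 < D \<and> (\<forall>f\<in>set fs. fbd (D - 1) f))"

fun fok :: "nat \<Rightarrow> form \<Rightarrow> bool" where
  "fok m (FV i) = (i < m)"
| "fok m (FN f) = fok m f"
| "fok m (FA fs) = (\<forall>f\<in>set fs. fok m f)"
| "fok m (FO fs) = (\<forall>f\<in>set fs. fok m f)"

fun fsize :: "form \<Rightarrow> nat" where
  "fsize (FV i) = 0"
| "fsize (FN f) = Suc (fsize f)"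
| "fsize (FA fs) = Suc (sum_list (map fsize fs))"
| "fsize (FO fs) = Suc (sum_list (map fsize fs))"

fun cmp1 :: "form \<Rightarrow> nat \<Rightarrow> gate list \<times> nat"
and cmpl :: "form list \<Rightarrow> nat \<Rightarrow> gate list \<times> nat list" where
  "cmp1 (FV i) n = ([], i)"
| "cmp1 (FN f) n = (case cmp1 f n of (gs, w) \<Rightarrow> (gs @ [NotG w], n + length gs))"
| "cmp1 (FA fs) n = (case cmpl fs n of (gs, ws) \<Rightarrow> (gs @ [AndG ws], n + length gs))"
| "cmp1 (FO fs) n = (case cmpl fs n of (gs, ws) \<Rightarrow> (gs @ [OrG ws], n + length gs))"
| "cmpl [] n = ([], [])"
| "cmpl (f # fs) n = (case cmp1 f n of (gs, w) \<Rightarrow>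
     (case cmpl fs (n + length gs) of (gs', ws) \<Rightarrow> (gs @ gs', w # ws)))"

lemma comp_size:
  "length (fst (cmp1 f n)) = fsize f"
  "length (fst (cmpl fs n)) = sum_list (map fsize fs)"
  by (induction f n and fs n rule: cmp1_cmpl.induct) (auto split: prod.splits)

lemma eval_gates_app: "eval_gates (gs1 @ gs2) vs = eval_gates gs2 (eval_gates gs1 vs)"
  by (induction gs1 arbitrary: vs) auto

lemma eval_gates_pre: "\<exists>ext. eval_gates gs vs = vs @ ext \<and> length ext = length gs"
proof (induction gs arbitrary: vs)
  case Nil then show ?case by simp
next
  case (Cons g gs)
  from Cons[of "vs @ [gate_val g vs]"] show ?case by auto
qed

lemma gate_depths_app: "gate_depths (gs1 @ gs2) vs = gate_depths gs2 (gate_depths gs1 vs)"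
  by (induction gs1 arbitrary: vs) auto

definition wfg :: "nat \<Rightarrow> gate list \<Rightarrow> bool" where
  "wfg n gs \<longleftrightarrow> (\<forall>i < length gs. \<forall>j \<in> set (gate_args (gs ! i)). j < n + i)"

lemma wfg_app: "wfg n (gs1 @ gs2) \<longleftrightarrow> wfg n gs1 \<and> wfg (n + length gs1) gs2"
proof
  assume a: "wfg n (gs1 @ gs2)"
  show "wfg n gs1 \<and> wfg (n + length gs1) gs2"
  proof
    show "wfg n gs1" unfolding wfg_def
    proof (intro allI impI ballI)
      fix i j assume "i < length gs1" "j \<in> set (gate_args (gs1 ! i))"
      then show "j < n + i" using a unfolding wfg_def
        by (metis length_append nth_append trans_less_add1)
    qed
    show "wfg (n + length gs1) gs2" unfolding wfg_def
    proof (intro allI impI ballI)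
      fix i j assume "i < length gs2" "j \<in> set (gate_args (gs2 ! i))"
      then have "length gs1 + i < length (gs1 @ gs2)" "j \<in> set (gate_args ((gs1 @ gs2) ! (length gs1 + i)))"
        by (auto simp: nth_append)
      then show "j < n + length gs1 + i" using a unfolding wfg_def by (metis add.assoc)
    qed
  qed
next
  assume a: "wfg n gs1 \<and> wfg (n + length gs1) gs2"
  show "wfg n (gs1 @ gs2)" unfolding wfg_def
  proof (intro allI impI ballI)
    fix i j assume i: "i < length (gs1 @ gs2)" and j: "j \<in> set (gate_args ((gs1 @ gs2) ! i))"
    show "j < n + i"
    proof (cases "i < length gs1")
      case True
      then show ?thesis using a j unfolding wfg_def by (auto simp: nth_append)
    next
      case False
      then have "i - length gs1 < length gs2" "j \<in> set (gate_args (gs2 ! (i - length gs1)))"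
        using i j by (auto simp: nth_append)
      then have "j < n + length gs1 + (i - length gs1)" using a unfolding wfg_def by blast
      then show ?thesis using False by simp
    qed
  qed
qed

lemma wfg_single: "wfg n [g] \<longleftrightarrow> (\<forall>j\<in>set (gate_args g). j < n)"
  unfolding wfg_def by auto

lemma comp_wf:
  "fok m f \<Longrightarrow> m \<le> n \<Longrightarrow> wfg n (fst (cmp1 f n)) \<and> snd (cmp1 f n) < n + length (fst (cmp1 f n))"
  "\<forall>f\<in>set fs. fok m f \<Longrightarrow> m \<le> n \<Longrightarrow> wfg n (fst (cmpl fs n)) \<and> (\<forall>w\<in>set (snd (cmpl fs n)). w < n + length (fst (cmpl fs n)))"
proof (induction f n and fs n rule: cmp1_cmpl.induct)
  case (6 f fs n)
  obtain gs w where c1: "cmp1 f n = (gs, w)" by force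
  obtain gs' ws where c2: "cmpl fs (n + length gs) = (gs', ws)" by force
  from 6 c1 c2 show ?case
    by (auto simp: wfg_app)
qed (auto split: prod.splits simp: wfg_app wfg_single wfg_def[of _ "[]"])

lemma gate_depths_pre: "\<exists>ext. gate_depths gs vs = vs @ ext \<and> length ext = length gs"
proof (induction gs arbitrary: vs)
  case Nil then show ?case by simp
next
  case (Cons g gs)
  from Cons[of "vs @ [Suc (foldr max (map ((!) vs) (gate_args g)) 0)]"] show ?case by auto
qed

lemma foldr_max_le: "foldr max xs (0::nat) \<le> D \<longleftrightarrow> (\<forall>x\<in>set xs. x \<le> D)"
  by (induction xs) auto

lemma comp_eval:
  "fok m f \<Longrightarrow> m \<le> n \<Longrightarrow> length vs = n \<Longrightarrow> (\<forall>i<m. vs ! i = xs ! i) \<Longrightarrow>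
     eval_gates (fst (cmp1 f n)) vs ! snd (cmp1 f n) = feval f xs"
  "\<forall>f\<in>set fs. fok m f \<Longrightarrow> m \<le> n \<Longrightarrow> length vs = n \<Longrightarrow> (\<forall>i<m. vs ! i = xs ! i) \<Longrightarrow>
     map (\<lambda>w. eval_gates (fst (cmpl fs n)) vs ! w) (snd (cmpl fs n)) = map (\<lambda>f. feval f xs) fs"
proof (induction f n and fs n arbitrary: vs and vs rule: cmp1_cmpl.induct)
  case (1 i n)
  then show ?case by simp
next
  case (2 f n)
  obtain gs w where c: "cmp1 f n = (gs, w)" by force
  obtain ext where e: "eval_gates gs vs = vs @ ext" "length ext = length gs" using eval_gates_pre by blast
  have "eval_gates gs vs ! w = feval f xs" using 2(1)[of vs] 2(2-5) c by simp
  then have iv: "(vs @ ext) ! w = feval f xs" using e by simp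
  have "eval_gates (gs @ [NotG w]) vs = (vs @ ext) @ [\<not> (vs @ ext) ! w]"
    using e by (simp add: eval_gates_app)
  moreover have "n + length gs = length (vs @ ext)" using e 2 by simp
  ultimately show ?case using c iv by (simp only: cmp1.simps prod.case fst_conv snd_conv nth_append_length feval.simps)
next
  case (3 fs n)
  obtain gs ws where c: "cmpl fs n = (gs, ws)" by force
  obtain ext where e: "eval_gates gs vs = vs @ ext" "length ext = length gs" using eval_gates_pre by blast
  have "map ((!) (eval_gates gs vs)) ws = map (\<lambda>f. feval f xs) fs" using 3(1)[of vs] 3(2-5) c by simp
  then have "map ((!) (vs @ ext)) ws = map (\<lambda>f. feval f xs) fs" using e by simp
  then have iv: "(\<forall>j\<in>set ws. (vs @ ext) ! j) = (\<forall>f\<in>set fs. feval f xs)"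
  proof -
    assume eq: "map ((!) (vs @ ext)) ws = map (\<lambda>f. feval f xs) fs"
    have "(\<forall>j\<in>set ws. (vs @ ext) ! j) = (\<forall>b\<in>set (map ((!) (vs @ ext)) ws). b)" by simp
    also have "\<dots> = (\<forall>b\<in>set (map (\<lambda>f. feval f xs) fs). b)" using eq by (simp only:)
    also have "\<dots> = (\<forall>f\<in>set fs. feval f xs)" by simp
    finally show ?thesis .
  qed
  have "eval_gates (gs @ [AndG ws]) vs = (vs @ ext) @ [\<forall>j\<in>set ws. (vs @ ext) ! j]"
    using e by (simp add: eval_gates_app)
  moreover have "n + length gs = length (vs @ ext)" using e 3 by simp
  ultimately show ?case using c iv by (simp only: cmp1.simps prod.case fst_conv snd_conv nth_append_length feval.simps)
next
  case (4 fs n)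
  obtain gs ws where c: "cmpl fs n = (gs, ws)" by force
  obtain ext where e: "eval_gates gs vs = vs @ ext" "length ext = length gs" using eval_gates_pre by blast
  have "map ((!) (eval_gates gs vs)) ws = map (\<lambda>f. feval f xs) fs" using 4(1)[of vs] 4(2-5) c by simp
  then have "map ((!) (vs @ ext)) ws = map (\<lambda>f. feval f xs) fs" using e by simp
  then have iv: "(\<exists>j\<in>set ws. (vs @ ext) ! j) = (\<exists>f\<in>set fs. feval f xs)"
  proof -
    assume eq: "map ((!) (vs @ ext)) ws = map (\<lambda>f. feval f xs) fs"
    have "(\<exists>j\<in>set ws. (vs @ ext) ! j) = (\<exists>b\<in>set (map ((!) (vs @ ext)) ws). b)" by simp
    also have "\<dots> = (\<exists>b\<in>set (map (\<lambda>f. feval f xs) fs). b)" using eq by (simp only:)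
    also have "\<dots> = (\<exists>f\<in>set fs. feval f xs)" by simp
    finally show ?thesis .
  qed
  have "eval_gates (gs @ [OrG ws]) vs = (vs @ ext) @ [\<exists>j\<in>set ws. (vs @ ext) ! j]"
    using e by (simp add: eval_gates_app)
  moreover have "n + length gs = length (vs @ ext)" using e 4 by simp
  ultimately show ?case using c iv by (simp only: cmp1.simps prod.case fst_conv snd_conv nth_append_length feval.simps)
next
  case (5 n)
  then show ?case by simp
next
  case (6 f fs n)
  obtain gs w where c1: "cmp1 f n = (gs, w)" by force
  obtain gs' ws where c2: "cmpl fs (n + length gs) = (gs', ws)" by force
  obtain ext where e: "eval_gates gs vs = vs @ ext" "length ext = length gs" using eval_gates_pre by blast
  obtain ext' where e': "eval_gates gs' (vs @ ext) = vs @ ext @ ext'" "length ext' = length gs'"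
    using eval_gates_pre[of gs' "vs @ ext"] by auto
  have w: "w < n + length gs" using comp_wf(1)[of m f n] 6 c1 by auto
  have m_le: "m \<le> n + length gs" using 6 by simp
  have v1: "(vs @ ext) ! w = feval f xs" using 6(1)[of vs] 6(3-6) c1 e by auto
  have v2: "map ((!) (vs @ ext @ ext')) ws = map (\<lambda>f. feval f xs) fs"
  proof -
    have "map ((!) (eval_gates gs' (vs @ ext))) ws = map (\<lambda>f. feval f xs) fs"
      using 6(2)[OF c1[symmetric], of "vs @ ext"] 6(3-6) c2 e m_le
      by (auto simp: nth_append)
    then show ?thesis using e' by simp
  qed
  have wl: "w < length (vs @ ext)" using w e 6(5) by simp
  have "(vs @ ext @ ext') ! w = ((vs @ ext) @ ext') ! w" by simp
  also have "\<dots> = (vs @ ext) ! w" using wl by (metis nth_append)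
  finally have "(vs @ ext @ ext') ! w = feval f xs" using v1 by simp
  then show ?case using c1 c2 e e' v2 by (auto simp: eval_gates_app)
qed

lemma comp_depth:
  "fok m f \<Longrightarrow> fbd D f \<Longrightarrow> m \<le> n \<Longrightarrow> length ds = n \<Longrightarrow> (\<forall>i<m. ds ! i = 0) \<Longrightarrow>
     gate_depths (fst (cmp1 f n)) ds ! snd (cmp1 f n) \<le> D \<and>
     (\<forall>i. n \<le> i \<longrightarrow> i < length (gate_depths (fst (cmp1 f n)) ds) \<longrightarrow> gate_depths (fst (cmp1 f n)) ds ! i \<le> D)"
  "\<forall>f\<in>set fs. fok m f \<Longrightarrow> \<forall>f\<in>set fs. fbd D f \<Longrightarrow> m \<le> n \<Longrightarrow> length ds = n \<Longrightarrow> (\<forall>i<m. ds ! i = 0) \<Longrightarrow>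
     (\<forall>w\<in>set (snd (cmpl fs n)). gate_depths (fst (cmpl fs n)) ds ! w \<le> D) \<and>
     (\<forall>i. n \<le> i \<longrightarrow> i < length (gate_depths (fst (cmpl fs n)) ds) \<longrightarrow> gate_depths (fst (cmpl fs n)) ds ! i \<le> D)"
proof (induction f n and fs n arbitrary: ds D and ds D rule: cmp1_cmpl.induct)
  case (1 i n)
  then show ?case by simp
next
  case (2 f n)
  obtain gs w where c: "cmp1 f n = (gs, w)" by force
  obtain ext where e: "gate_depths gs ds = ds @ ext" "length ext = length gs" using gate_depths_pre by blast
  have D: "0 < D" "fbd (D - 1) f" using 2 by auto
  have ih: "(ds @ ext) ! w \<le> D - 1 \<and> (\<forall>i. n \<le> i \<longrightarrow> i < length (ds @ ext) \<longrightarrow> (ds @ ext) ! i \<le> D - 1)"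
    using 2(1)[of "D - 1" ds] 2(2,4-6) D c e by simp
  have G: "gate_depths (gs @ [NotG w]) ds = (ds @ ext) @ [Suc ((ds @ ext) ! w)]"
    using e by (simp add: gate_depths_app)
  show ?case
  proof (simp only: cmp1.simps c prod.case fst_conv snd_conv G, intro conjI allI impI)
    have "n + length gs = length (ds @ ext)" using e 2 by simp
    moreover have "(ds @ ext) ! w \<le> D - 1" using ih by simp
    ultimately show "((ds @ ext) @ [Suc ((ds @ ext) ! w)]) ! (n + length gs) \<le> D" using D by simp
  next
    fix i assume "n \<le> i" "i < length ((ds @ ext) @ [Suc ((ds @ ext) ! w)])"
    then show "((ds @ ext) @ [Suc ((ds @ ext) ! w)]) ! i \<le> D" using ih D
      by (cases "i < length (ds @ ext)") (auto simp: nth_append)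
  qed
next
  case (3 fs n)
  obtain gs ws where c: "cmpl fs n = (gs, ws)" by force
  obtain ext where e: "gate_depths gs ds = ds @ ext" "length ext = length gs" using gate_depths_pre by blast
  have D: "0 < D" "\<forall>f\<in>set fs. fbd (D - 1) f" using 3 by auto
  have ih: "(\<forall>w\<in>set ws. (ds @ ext) ! w \<le> D - 1) \<and> (\<forall>i. n \<le> i \<longrightarrow> i < length (ds @ ext) \<longrightarrow> (ds @ ext) ! i \<le> D - 1)"
    using 3(1)[of "D - 1" ds] 3(2,4-6) D c e by simp
  let ?x = "Suc (foldr max (map ((!) (ds @ ext)) ws) 0)"
  have G: "gate_depths (gs @ [AndG ws]) ds = (ds @ ext) @ [?x]"
    using e by (simp add: gate_depths_app)
  have "foldr max (map ((!) (ds @ ext)) ws) 0 \<le> D - 1" using ih by (auto simp: foldr_max_le)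
  then have x: "?x \<le> D" using D by simp
  show ?case
  proof (simp only: cmp1.simps c prod.case fst_conv snd_conv G, intro conjI allI impI)
    have "n + length gs = length (ds @ ext)" using e 3 by simp
    then show "((ds @ ext) @ [?x]) ! (n + length gs) \<le> D" using x by simp
  next
    fix i assume "n \<le> i" "i < length ((ds @ ext) @ [?x])"
    then show "((ds @ ext) @ [?x]) ! i \<le> D" using ih x
      by (cases "i < length (ds @ ext)") (auto simp: nth_append)
  qed
next
  case (4 fs n)
  obtain gs ws where c: "cmpl fs n = (gs, ws)" by force
  obtain ext where e: "gate_depths gs ds = ds @ ext" "length ext = length gs" using gate_depths_pre by blast
  have D: "0 < D" "\<forall>f\<in>set fs. fbd (D - 1) f" using 4 by auto
  have ih: "(\<forall>w\<in>set ws. (ds @ ext) ! w \<le> D - 1) \<and> (\<forall>i. n \<le> i \<longrightarrow> i < length (ds @ ext) \<longrightarrow> (ds @ ext) ! i \<le> D - 1)"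
    using 4(1)[of "D - 1" ds] 4(2,4-6) D c e by simp
  let ?x = "Suc (foldr max (map ((!) (ds @ ext)) ws) 0)"
  have G: "gate_depths (gs @ [OrG ws]) ds = (ds @ ext) @ [?x]"
    using e by (simp add: gate_depths_app)
  have "foldr max (map ((!) (ds @ ext)) ws) 0 \<le> D - 1" using ih by (auto simp: foldr_max_le)
  then have x: "?x \<le> D" using D by simp
  show ?case
  proof (simp only: cmp1.simps c prod.case fst_conv snd_conv G, intro conjI allI impI)
    have "n + length gs = length (ds @ ext)" using e 4 by simp
    then show "((ds @ ext) @ [?x]) ! (n + length gs) \<le> D" using x by simp
  next
    fix i assume "n \<le> i" "i < length ((ds @ ext) @ [?x])"
    then show "((ds @ ext) @ [?x]) ! i \<le> D" using ih x
      by (cases "i < length (ds @ ext)") (auto simp: nth_append)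
  qed
next
  case (5 n)
  then show ?case by simp
next
  case (6 f fs n)
  obtain gs w where c1: "cmp1 f n = (gs, w)" by force
  obtain gs' ws where c2: "cmpl fs (n + length gs) = (gs', ws)" by force
  obtain ext where e: "gate_depths gs ds = ds @ ext" "length ext = length gs" using gate_depths_pre by blast
  obtain ext' where e': "gate_depths gs' (ds @ ext) = ds @ ext @ ext'" "length ext' = length gs'"
    using gate_depths_pre[of gs' "ds @ ext"] by auto
  have w: "w < n + length gs" using comp_wf(1)[of m f n] 6 c1 by auto
  have m_le: "m \<le> n + length gs" using 6 by simp
  have ih1: "(ds @ ext) ! w \<le> D \<and> (\<forall>i. n \<le> i \<longrightarrow> i < length (ds @ ext) \<longrightarrow> (ds @ ext) ! i \<le> D)"
    using 6(1)[of D ds] 6(3-7) c1 e by simp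
  have ih2: "(\<forall>w\<in>set ws. (ds @ ext @ ext') ! w \<le> D) \<and>
     (\<forall>i. n + length gs \<le> i \<longrightarrow> i < length (ds @ ext @ ext') \<longrightarrow> (ds @ ext @ ext') ! i \<le> D)"
    using 6(2)[OF c1[symmetric], of D "ds @ ext"] 6(3-7) c2 e e' m_le by (auto simp: nth_append)
  have wl: "w < length (ds @ ext)" using w e 6(6) by simp
  have "(ds @ ext @ ext') ! w = ((ds @ ext) @ ext') ! w" by simp
  also have "\<dots> = (ds @ ext) ! w" using wl by (metis nth_append)
  finally have v1: "(ds @ ext @ ext') ! w \<le> D" using ih1 by simp
  have v3: "(ds @ ext @ ext') ! i \<le> D" if "n \<le> i" "i < length (ds @ ext @ ext')" for i
  proof (cases "i < length (ds @ ext)")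
    case True
    have "(ds @ ext @ ext') ! i = ((ds @ ext) @ ext') ! i" by simp
    also have "\<dots> = (ds @ ext) ! i" using True by (metis nth_append)
    finally show ?thesis using ih1 that True by simp
  next
    case False
    then show ?thesis using ih2 that e 6(6) by simp
  qed
  show ?case using c1 c2 e e' v1 v3 ih2 by (auto simp: gate_depths_app)
qed

definition mkc :: "nat \<Rightarrow> form list \<Rightarrow> circuit" where
  "mkc m fs = \<lparr>c_inputs = m, c_gates = fst (cmpl fs m), c_outputs = snd (cmpl fs m)\<rparr>"

lemma mkc_props:
  assumes ok: "\<forall>f\<in>set fs. fok m f" and bd: "\<forall>f\<in>set fs. fbd D f"
  shows "wf_circuit (mkc m fs)" "circ_depth (mkc m fs) \<le> D"
    "circ_size (mkc m fs) = m + sum_list (map fsize fs)"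
    "length xs = m \<Longrightarrow> circ_eval (mkc m fs) xs = map (\<lambda>f. feval f xs) fs"
proof -
  have wf: "wfg m (fst (cmpl fs m)) \<and> (\<forall>w\<in>set (snd (cmpl fs m)). w < m + length (fst (cmpl fs m)))"
    using comp_wf(2)[OF ok] by simp
  then show "wf_circuit (mkc m fs)" unfolding wf_circuit_def mkc_def wfg_def by simp
  show "circ_size (mkc m fs) = m + sum_list (map fsize fs)"
    unfolding circ_size_def mkc_def by (simp add: comp_size)
  {
    assume l: "length xs = m"
    have "map (\<lambda>w. eval_gates (fst (cmpl fs m)) xs ! w) (snd (cmpl fs m)) = map (\<lambda>f. feval f xs) fs"
      using comp_eval(2)[OF ok le_refl l] by simp
    then show "circ_eval (mkc m fs) xs = map (\<lambda>f. feval f xs) fs"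
      unfolding circ_eval_def mkc_def by simp
  }
  let ?G = "gate_depths (fst (cmpl fs m)) (replicate m 0)"
  have d: "(\<forall>i. m \<le> i \<longrightarrow> i < length ?G \<longrightarrow> ?G ! i \<le> D)"
    using comp_depth(2)[OF ok bd le_refl, of "replicate m 0"] by simp
  obtain ext where e: "?G = replicate m 0 @ ext" using gate_depths_pre by blast
  have "\<forall>x\<in>set ?G. x \<le> D"
  proof
    fix x assume "x \<in> set ?G"
    then obtain i where i: "i < length ?G" "?G ! i = x" by (auto simp: in_set_conv_nth)
    show "x \<le> D"
    proof (cases "i < m")
      case True
      then show ?thesis using i e by (simp add: nth_append)
    next
      case False
      then have "m \<le> i" by simp
      then show ?thesis using d i by blast
    qed
  qed
  then show "circ_depth (mkc m fs) \<le> D" unfolding circ_depth_def mkc_def by (simp add: foldr_max_le)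
qed



fun lexless :: "bool list \<Rightarrow> bool list \<Rightarrow> bool" where
  "lexless (x # xs) (a # as) = ((\<not> x \<and> a) \<or> (x = a \<and> lexless xs as))"
| "lexless _ _ = False"

fun bval :: "bool list \<Rightarrow> nat" where
  "bval [] = 0"
| "bval (a # as) = (if a then 2 ^ length as else 0) + bval as"

lemma bval_lt: "bval as < 2 ^ length as"
  by (induction as) auto

lemma map_bern_bind: "map_pmf g M = bind_pmf M (\<lambda>x. return_pmf (g x))"
  by (simp add: map_pmf_def)

lemma rep_Suc_map: "replicate_pmf (Suc n) p = bind_pmf p (\<lambda>x. map_pmf (\<lambda>xs. x # xs) (replicate_pmf n p))"
  by (simp add: map_pmf_def)

lemma set_rep_coin: "set_pmf (replicate_pmf n coin) = {xs. length xs = n}"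
  by (simp add: set_replicate_pmf)

lemma lexless_prob:
  "map_pmf (\<lambda>kb. lexless kb as) (replicate_pmf (length as) coin) = bernoulli_pmf (bval as / 2 ^ length as)"
proof (induction as)
  case Nil
  show ?case by (rule bool_pmf_eqI) simp
next
  case (Cons a as)
  let ?q = "bval as / 2 ^ length as"
  have q: "0 \<le> ?q" "?q \<le> 1"
  proof -
    have "real (bval as) \<le> 2 ^ length as"
      using bval_lt[of as] by (metis less_imp_le of_nat_le_iff of_nat_numeral of_nat_power)
    then show "0 \<le> ?q" "?q \<le> 1" by (auto simp: field_simps)
  qed
  have q': "0 \<le> bval (a # as) / 2 ^ length (a # as)" "bval (a # as) / 2 ^ length (a # as) \<le> 1"
  proof -
    have "real (bval (a # as)) \<le> 2 ^ length (a # as)"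
      using bval_lt[of "a # as"] by (metis less_imp_le of_nat_le_iff of_nat_numeral of_nat_power)
    then show "0 \<le> bval (a # as) / 2 ^ length (a # as)" "bval (a # as) / 2 ^ length (a # as) \<le> 1"
      by (auto simp: field_simps simp del: bval.simps)
  qed
  have "map_pmf (\<lambda>kb. lexless kb (a # as)) (replicate_pmf (length (a # as)) coin)
     = bind_pmf coin (\<lambda>x. map_pmf (\<lambda>K. (\<not> x \<and> a) \<or> (x = a \<and> K))
           (map_pmf (\<lambda>kb. lexless kb as) (replicate_pmf (length as) coin)))"
    by (simp add: rep_Suc_map map_bind_pmf pmf.map_comp o_def map_pmf_def[symmetric])
  also have "\<dots> = bind_pmf coin (\<lambda>x. bind_pmf (bernoulli_pmf ?q) (\<lambda>K. return_pmf ((\<not> x \<and> a) \<or> (x = a \<and> K))))"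
    by (subst Cons) (simp add: map_pmf_def)
  also have "\<dots> = bernoulli_pmf (bval (a # as) / 2 ^ length (a # as))"
    using q q' by (intro bool_pmf_eqI) (auto simp: pmf_bind_bern pmf_return field_simps)
  finally show ?case .
qed

definition Kv :: "bool \<Rightarrow> bool list \<Rightarrow> bool list \<Rightarrow> bool" where
  "Kv allK as kb = (allK \<or> lexless kb as)"

definition qv :: "bool \<Rightarrow> bool list \<Rightarrow> real" where
  "qv allK as = (if allK then 1 else bval as / 2 ^ length as)"

definition thv :: "bool \<Rightarrow> bool \<Rightarrow> bool list \<Rightarrow> real" where
  "thv neg allK as = (if neg then - qv allK as else qv allK as)"

definition nxtS :: "bool \<Rightarrow> bool \<Rightarrow> bool list \<Rightarrow> bool \<Rightarrow> bool list \<Rightarrow> bool" where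
  "nxtS neg allK as s own = (if Kv allK as (tl own) then s \<noteq> neg else hd own)"

lemma qv_bounds: "0 \<le> qv allK as" "qv allK as \<le> 1"
proof -
  have "real (bval as) \<le> 2 ^ length as"
    using bval_lt[of as] by (metis less_imp_le of_nat_le_iff of_nat_numeral of_nat_power)
  then show "0 \<le> qv allK as" "qv allK as \<le> 1" by (auto simp: qv_def field_simps)
qed

lemma K_prob: "map_pmf (Kv allK as) (replicate_pmf (length as) coin) = bernoulli_pmf (qv allK as)"
proof (cases allK)
  case True
  then have "Kv allK as = (\<lambda>_. True)" by (auto simp: Kv_def)
  then show ?thesis using True by (intro bool_pmf_eqI) (simp add: qv_def map_pmf_const)
next
  case False
  then have "Kv allK as = (\<lambda>kb. lexless kb as)" by (auto simp: Kv_def)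
  then show ?thesis using False lexless_prob[of as] by (simp add: qv_def)
qed

lemma nxtS_prob:
  "map_pmf (nxtS neg allK as s) (replicate_pmf (Suc (length as)) coin)
   = map_pmf (\<lambda>b. if b then s else \<not> s) (bernoulli_pmf ((1 + thv neg allK as) / 2))"
proof -
  let ?q = "qv allK as"
  have "map_pmf (nxtS neg allK as s) (replicate_pmf (Suc (length as)) coin)
     = bind_pmf coin (\<lambda>r. map_pmf (\<lambda>K. if K then s \<noteq> neg else r) (map_pmf (Kv allK as) (replicate_pmf (length as) coin)))"
    unfolding rep_Suc_map map_bind_pmf pmf.map_comp o_def nxtS_def by simp
  also have "\<dots> = bind_pmf coin (\<lambda>r. bind_pmf (bernoulli_pmf ?q) (\<lambda>K. return_pmf (if K then s \<noteq> neg else r)))"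
    by (subst K_prob) (simp add: map_pmf_def)
  also have "\<dots> = bind_pmf (bernoulli_pmf ((1 + thv neg allK as) / 2)) (\<lambda>b. return_pmf (if b then s else \<not> s))"
  proof (rule bool_pmf_eqI)
    have p: "0 \<le> (1 + thv neg allK as) / 2" "(1 + thv neg allK as) / 2 \<le> 1"
      using qv_bounds[of allK as] by (auto simp: thv_def)
    show "pmf (bind_pmf coin (\<lambda>r. bind_pmf (bernoulli_pmf ?q) (\<lambda>K. return_pmf (if K then s \<noteq> neg else r)))) True
      = pmf (bind_pmf (bernoulli_pmf ((1 + thv neg allK as) / 2)) (\<lambda>b. return_pmf (if b then s else \<not> s))) True"
      using qv_bounds[of allK as] p
      by (cases s; cases neg) (auto simp: pmf_bind_bern pmf_return thv_def field_simps)
  qed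
  also have "\<dots> = map_pmf (\<lambda>b. if b then s else \<not> s) (bernoulli_pmf ((1 + thv neg allK as) / 2))"
    by (simp add: map_pmf_def)
  finally show ?thesis .
qed



fun Lk :: "nat \<Rightarrow> nat \<Rightarrow> nat \<Rightarrow> nat" where
  "Lk k w 0 = 0"
| "Lk k w (Suc d) = k * (w + Lk k w d)"

fun paths :: "nat \<Rightarrow> nat \<Rightarrow> nat \<Rightarrow> nat list list" where
  "paths k w 0 = [[]]"
| "paths k w (Suc d) = concat (map (\<lambda>j. map (\<lambda>p. (j * (w + Lk k w d)) # map (\<lambda>z. j * (w + Lk k w d) + w + z) p)
     (paths k w d)) [0..<k])"

definition grp :: "nat \<Rightarrow> bool list \<Rightarrow> nat \<Rightarrow> bool list" where
  "grp w xs z = take w (drop z xs)"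

fun fval :: "bool \<Rightarrow> bool \<Rightarrow> bool list \<Rightarrow> bool \<Rightarrow> bool list list \<Rightarrow> bool" where
  "fval neg allK as s [] = s"
| "fval neg allK as s (g # gs) = fval neg allK as (nxtS neg allK as s g) gs"

definition gen :: "nat \<Rightarrow> bool \<Rightarrow> bool \<Rightarrow> bool list \<Rightarrow> nat \<Rightarrow> bool \<Rightarrow> bool list \<Rightarrow> bool list" where
  "gen k neg allK as d s xs = map (\<lambda>p. fval neg allK as s (map (grp (Suc (length as)) xs) p)) (paths k (Suc (length as)) d)"

lemma paths_ok: "p \<in> set (paths k w d) \<Longrightarrow> (\<forall>z\<in>set p. z + w \<le> Lk k w d) \<and> length p = d"
proof (induction d arbitrary: p)
  case 0
  then show ?case by simp
next
  case (Suc d)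
  let ?B = "w + Lk k w d"
  from Suc.prems obtain j p' where j: "j < k" and p': "p' \<in> set (paths k w d)"
    and p: "p = (j * ?B) # map (\<lambda>z. j * ?B + w + z) p'" by auto
  have jk: "j * ?B + ?B \<le> k * ?B" using j
    by (metis add.commute mult_Suc le_eq_less_or_eq mult_le_mono1 Suc_leI)
  from Suc.IH[OF p'] have ih: "\<forall>z\<in>set p'. z + w \<le> Lk k w d" "length p' = d" by auto
  show ?case using jk ih p by auto
qed

lemma length_paths: "length (paths k w d) = k ^ d"
proof (induction d)
  case 0 then show ?case by simp
next
  case (Suc d)
  have "length (paths k w (Suc d)) = sum_list (map (\<lambda>j. k ^ d) [0..<k])"
    by (simp add: length_concat o_def Suc)
  also have "\<dots> = k ^ Suc d" by (simp add: sum_list_triv)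
  finally show ?case .
qed

lemma drop_concat_blocks:
  "(\<forall>b\<in>set blks. length b = B) \<Longrightarrow> j < length blks \<Longrightarrow>
     drop (j * B) (concat blks) = blks ! j @ concat (drop (Suc j) blks)"
proof (induction blks arbitrary: j)
  case Nil then show ?case by simp
next
  case (Cons b blks)
  show ?case
  proof (cases j)
    case 0 then show ?thesis by simp
  next
    case (Suc j')
    have "drop (j * B) (concat (b # blks)) = drop (j' * B) (concat blks)"
      using Cons.prems Suc by (simp add: add.commute)
    then show ?thesis using Cons Suc by simp
  qed
qed

lemma grp_concat:
  assumes "\<forall>b\<in>set blks. length b = B" "j < length blks" "i + w \<le> B"
  shows "grp w (concat blks) (j * B + i) = grp w (blks ! j) i"
proof -
  have "drop (j * B + i) (concat blks) = drop i (blks ! j @ concat (drop (Suc j) blks))"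
    using drop_concat_blocks[OF assms(1,2)] by (simp add: add.commute drop_drop[symmetric])
  also have "\<dots> = drop i (blks ! j) @ concat (drop (Suc j) blks)"
    using assms nth_mem by auto
  finally show ?thesis unfolding grp_def using assms nth_mem by fastforce
qed

lemma map_blks: "map F xs = map (\<lambda>j. F (xs ! j)) [0..<length xs]"
  by (rule nth_equalityI) auto

lemma gen_Suc:
  assumes len: "length blks = k" and bl: "\<forall>b\<in>set blks. length b = Suc (length as) + Lk k (Suc (length as)) d"
  shows "gen k neg allK as (Suc d) s (concat blks)
       = concat (map (\<lambda>b. gen k neg allK as d (nxtS neg allK as s (take (Suc (length as)) b)) (drop (Suc (length as)) b)) blks)"
proof -
  define w where "w = Suc (length as)"
  define B where "B = w + Lk k w d"
  have bl': "\<forall>b\<in>set blks. length b = B" using bl by (simp add: w_def B_def)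
  have key: "fval neg allK as s (map (grp w (concat blks)) ((j * B) # map (\<lambda>z. j * B + w + z) p))
     = fval neg allK as (nxtS neg allK as s (take w (blks ! j))) (map (grp w (drop w (blks ! j))) p)"
    if j: "j < k" and p: "p \<in> set (paths k w d)" for j p
  proof -
    have ok: "\<forall>z\<in>set p. z + w \<le> Lk k w d" using paths_ok[OF p] by simp
    have g0: "grp w (concat blks) (j * B) = take w (blks ! j)"
      using grp_concat[OF bl', of j 0 w] j len by (simp add: B_def grp_def)
    have g1: "map (grp w (concat blks)) (map (\<lambda>z. j * B + w + z) p) = map (grp w (drop w (blks ! j))) p"
    proof -
      have gz: "grp w (concat blks) (j * B + w + z) = grp w (drop w (blks ! j)) z" if "z \<in> set p" for z
      proof -
        have "(w + z) + w \<le> B" using ok that by (auto simp: B_def)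
        then have "grp w (concat blks) (j * B + (w + z)) = grp w (blks ! j) (w + z)"
          using grp_concat[OF bl', of j "w + z" w] j len by simp
        moreover have r: "grp w (drop w (blks ! j)) z = grp w (blks ! j) (w + z)" by (simp add: grp_def add.commute)
        ultimately show ?thesis by (simp only: r add.assoc)
      qed
      show ?thesis unfolding map_map by (rule map_cong[OF refl]) (simp add: gz)
    qed
    show ?thesis by (simp only: list.map fval.simps g0 g1)
  qed
  have "gen k neg allK as (Suc d) s (concat blks)
     = concat (map (\<lambda>j. map (\<lambda>p. fval neg allK as (nxtS neg allK as s (take w (blks ! j))) (map (grp w (drop w (blks ! j))) p)) (paths k w d)) [0..<k])"
  proof -
    have "gen k neg allK as (Suc d) s (concat blks) = concat (map (\<lambda>j. map (\<lambda>p. fval neg allK as s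
        (map (grp w (concat blks)) ((j * B) # map (\<lambda>z. j * B + w + z) p))) (paths k w d)) [0..<k])"
      unfolding gen_def w_def[symmetric] paths.simps B_def[symmetric] by (simp add: map_concat o_def)
    also have "\<dots> = concat (map (\<lambda>j. map (\<lambda>p. fval neg allK as (nxtS neg allK as s (take w (blks ! j))) (map (grp w (drop w (blks ! j))) p)) (paths k w d)) [0..<k])"
      by (intro arg_cong[where f=concat] map_cong refl) (use key in auto)
    finally show ?thesis .
  qed
  also have "\<dots> = concat (map (\<lambda>j. gen k neg allK as d (nxtS neg allK as s (take w (blks ! j))) (drop w (blks ! j))) [0..<k])"
    by (simp add: gen_def w_def)
  also have "\<dots> = concat (map (\<lambda>b. gen k neg allK as d (nxtS neg allK as s (take w b)) (drop w b)) blks)"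
    using len map_blks[of "\<lambda>b. gen k neg allK as d (nxtS neg allK as s (take w b)) (drop w b)" blks] by simp
  finally show ?thesis by (simp add: w_def)
qed

lemma gen_dist:
  "map_pmf (gen k neg allK as d s) (replicate_pmf (Lk k (Suc (length as)) d) coin) = bcast k (thv neg allK as) d s"
proof (induction d arbitrary: s)
  case 0
  then show ?case by (simp add: gen_def)
next
  case (Suc d)
  define w where "w = Suc (length as)"
  define B where "B = w + Lk k w d"
  define g where "g = (\<lambda>b. gen k neg allK as d (nxtS neg allK as s (take w b)) (drop w b))"
  have "map_pmf g (replicate_pmf B coin)
      = bind_pmf (replicate_pmf w coin) (\<lambda>xs. map_pmf (\<lambda>ys. g (xs @ ys)) (replicate_pmf (Lk k w d) coin))"
    unfolding B_def replicate_pmf_distrib by (simp add: map_bind_pmf map_pmf_def[symmetric] pmf.map_comp o_def)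
  also have "\<dots> = bind_pmf (replicate_pmf w coin) (\<lambda>xs. map_pmf (gen k neg allK as d (nxtS neg allK as s xs)) (replicate_pmf (Lk k w d) coin))"
  proof (rule bind_pmf_cong[OF refl])
    fix xs assume "xs \<in> set_pmf (replicate_pmf w coin)"
    then have "length xs = w" by (simp add: set_rep_coin)
    then show "map_pmf (\<lambda>ys. g (xs @ ys)) (replicate_pmf (Lk k w d) coin) = map_pmf (gen k neg allK as d (nxtS neg allK as s xs)) (replicate_pmf (Lk k w d) coin)"
      by (simp add: g_def)
  qed
  also have "\<dots> = bind_pmf (replicate_pmf w coin) (\<lambda>xs. bcast k (thv neg allK as) d (nxtS neg allK as s xs))"
    using Suc by (simp add: w_def)
  also have "\<dots> = bind_pmf (map_pmf (nxtS neg allK as s) (replicate_pmf w coin)) (bcast k (thv neg allK as) d)"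
    by (simp add: bind_map_pmf)
  also have "\<dots> = bind_pmf (bernoulli_pmf ((1 + thv neg allK as) / 2)) (\<lambda>b. bcast k (thv neg allK as) d (if b then s else \<not> s))"
    unfolding w_def nxtS_prob by (simp add: bind_map_pmf)
  finally have gd: "map_pmf g (replicate_pmf B coin) = bind_pmf (bernoulli_pmf ((1 + thv neg allK as) / 2)) (\<lambda>b. bcast k (thv neg allK as) d (if b then s else \<not> s))" .
  have "map_pmf (gen k neg allK as (Suc d) s) (replicate_pmf (Lk k w (Suc d)) coin)
      = map_pmf (gen k neg allK as (Suc d) s) (map_pmf concat (replicate_pmf k (replicate_pmf B coin)))"
    by (simp add: rep_mult[symmetric] B_def)
  also have "\<dots> = map_pmf (\<lambda>blks. concat (map g blks)) (replicate_pmf k (replicate_pmf B coin))"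
    unfolding pmf.map_comp
  proof (rule map_pmf_cong[OF refl])
    fix blks assume "blks \<in> set_pmf (replicate_pmf k (replicate_pmf B coin))"
    then have "length blks = k" "\<forall>b\<in>set blks. length b = Suc (length as) + Lk k (Suc (length as)) d"
      by (auto simp: set_replicate_pmf set_rep_coin B_def w_def)
    from gen_Suc[OF this] show "(gen k neg allK as (Suc d) s \<circ> concat) blks = concat (map g blks)"
      by (simp add: g_def w_def)
  qed
  also have "\<dots> = map_pmf concat (replicate_pmf k (map_pmf g (replicate_pmf B coin)))"
    by (simp add: rep_map pmf.map_comp o_def)
  also have "\<dots> = bcast k (thv neg allK as) (Suc d) s"
    by (simp add: gd seq_rep)
  finally show ?case by (simp add: w_def)
qed



definition cfv :: "bool \<Rightarrow> bool \<Rightarrow> bool list \<Rightarrow> bool \<Rightarrow> bool list list \<Rightarrow> bool" where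
  "cfv neg allK as s gs =
    ((\<exists>i<length gs. \<not> Kv allK as (tl (gs ! i)) \<and> (\<forall>j. i < j \<and> j < length gs \<longrightarrow> Kv allK as (tl (gs ! j)))
        \<and> (hd (gs ! i) \<noteq> (neg \<and> odd (length gs - 1 - i))))
     \<or> ((\<forall>j<length gs. Kv allK as (tl (gs ! j))) \<and> (s \<noteq> (neg \<and> odd (length gs)))))"

lemma fval_cfv: "fval neg allK as s gs = cfv neg allK as s gs"
proof (induction gs arbitrary: s)
  case Nil
  then show ?case by (simp add: cfv_def)
next
  case (Cons g gs)
  let ?K = "\<lambda>g. Kv allK as (tl g)"
  let ?n = "length gs"
  have "fval neg allK as s (g # gs) = cfv neg allK as (nxtS neg allK as s g) gs" using Cons by simp
  also have "\<dots> = cfv neg allK as s (g # gs)"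
  proof (cases "\<exists>j<?n. \<not> ?K (gs ! j)")
    case True
    have "cfv neg allK as (nxtS neg allK as s g) gs =
       (\<exists>i<?n. \<not> ?K (gs ! i) \<and> (\<forall>j. i < j \<and> j < ?n \<longrightarrow> ?K (gs ! j)) \<and> (hd (gs ! i) \<noteq> (neg \<and> odd (?n - 1 - i))))"
      using True unfolding cfv_def by blast
    moreover have "cfv neg allK as s (g # gs) =
       (\<exists>i<?n. \<not> ?K (gs ! i) \<and> (\<forall>j. i < j \<and> j < ?n \<longrightarrow> ?K (gs ! j)) \<and> (hd (gs ! i) \<noteq> (neg \<and> odd (?n - 1 - i))))"
    proof -
      have a: "\<not> (\<forall>j<length (g # gs). ?K ((g # gs) ! j))" using True by auto
      have b: "\<not> (\<forall>j. 0 < j \<and> j < length (g # gs) \<longrightarrow> ?K ((g # gs) ! j))"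
      proof
        assume A: "\<forall>j. 0 < j \<and> j < length (g # gs) \<longrightarrow> ?K ((g # gs) ! j)"
        from True obtain j where "j < ?n" "\<not> ?K (gs ! j)" by blast
        with A[rule_format, of "Suc j"] show False by simp
      qed
      have c: "(\<forall>j. Suc i < j \<and> j < length (g # gs) \<longrightarrow> ?K ((g # gs) ! j)) = (\<forall>j. i < j \<and> j < ?n \<longrightarrow> ?K (gs ! j))" for i
      proof
        assume A: "\<forall>j. Suc i < j \<and> j < length (g # gs) \<longrightarrow> ?K ((g # gs) ! j)"
        show "\<forall>j. i < j \<and> j < ?n \<longrightarrow> ?K (gs ! j)"
        proof (intro allI impI)
          fix j assume "i < j \<and> j < ?n"
          with A[rule_format, of "Suc j"] show "?K (gs ! j)" by simp
        qed
      next
        assume A: "\<forall>j. i < j \<and> j < ?n \<longrightarrow> ?K (gs ! j)"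
        show "\<forall>j. Suc i < j \<and> j < length (g # gs) \<longrightarrow> ?K ((g # gs) ! j)"
        proof (intro allI impI)
          fix j assume j: "Suc i < j \<and> j < length (g # gs)"
          then obtain j' where "j = Suc j'" by (cases j) auto
          with j A[rule_format, of j'] show "?K ((g # gs) ! j)" by simp
        qed
      qed
      let ?phi = "\<lambda>i. \<not> ?K ((g # gs) ! i) \<and> (\<forall>j. i < j \<and> j < length (g # gs) \<longrightarrow> ?K ((g # gs) ! j))
        \<and> (hd ((g # gs) ! i) \<noteq> (neg \<and> odd (length (g # gs) - 1 - i)))"
      let ?psi = "\<lambda>i. \<not> ?K (gs ! i) \<and> (\<forall>j. i < j \<and> j < ?n \<longrightarrow> ?K (gs ! j)) \<and> (hd (gs ! i) \<noteq> (neg \<and> odd (?n - 1 - i)))"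
      have "cfv neg allK as s (g # gs) = ((\<exists>i<length (g # gs). ?phi i) \<or>
          ((\<forall>j<length (g # gs). ?K ((g # gs) ! j)) \<and> (s \<noteq> (neg \<and> odd (length (g # gs))))))"
        unfolding cfv_def by (rule refl)
      also have "\<dots> = (\<exists>i<length (g # gs). ?phi i)" using a by blast
      also have "\<dots> = (?phi 0 \<or> (\<exists>i<?n. ?phi (Suc i)))" unfolding length_Cons by (rule Ex_less_Suc2)
      also have "\<dots> = (\<exists>i<?n. ?phi (Suc i))" using b by blast
      also have "\<dots> = (\<exists>i<?n. ?psi i)"
      proof (intro ex_cong1 conj_cong refl)
        fix i
        show "(\<not> ?K ((g # gs) ! Suc i)) = (\<not> ?K (gs ! i))" by simp
        show "(\<forall>j. Suc i < j \<and> j < length (g # gs) \<longrightarrow> ?K ((g # gs) ! j)) = (\<forall>j. i < j \<and> j < ?n \<longrightarrow> ?K (gs ! j))"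
          by (rule c)
        show "(hd ((g # gs) ! Suc i) \<noteq> (neg \<and> odd (length (g # gs) - 1 - Suc i))) = (hd (gs ! i) \<noteq> (neg \<and> odd (?n - 1 - i)))"
          by simp
      qed
      finally show ?thesis by blast
    qed
    ultimately show ?thesis by simp
  next
    case False
    then have allK: "\<forall>j<?n. ?K (gs ! j)" by simp
    have l: "cfv neg allK as (nxtS neg allK as s g) gs = (nxtS neg allK as s g \<noteq> (neg \<and> odd ?n))"
      using allK unfolding cfv_def by auto
    have r: "cfv neg allK as s (g # gs) = ((\<not> ?K g \<and> (hd g \<noteq> (neg \<and> odd ?n))) \<or> (?K g \<and> (s \<noteq> (neg \<and> odd (Suc ?n)))))"
    proof -
      let ?phi = "\<lambda>i. \<not> ?K ((g # gs) ! i) \<and> (\<forall>j. i < j \<and> j < length (g # gs) \<longrightarrow> ?K ((g # gs) ! j))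
        \<and> (hd ((g # gs) ! i) \<noteq> (neg \<and> odd (length (g # gs) - 1 - i)))"
      have allK': "\<forall>j. 0 < j \<and> j < length (g # gs) \<longrightarrow> ?K ((g # gs) ! j)"
      proof (intro allI impI)
        fix j assume j: "0 < j \<and> j < length (g # gs)"
        then obtain j' where "j = Suc j'" by (cases j) auto
        with j allK show "?K ((g # gs) ! j)" by simp
      qed
      have nphi: "\<not> (\<exists>i<?n. ?phi (Suc i))" using allK by simp
      have all: "(\<forall>j<length (g # gs). ?K ((g # gs) ! j)) = ?K g"
        using allK unfolding length_Cons All_less_Suc2 by simp
      have "cfv neg allK as s (g # gs) = ((\<exists>i<length (g # gs). ?phi i) \<or>
          ((\<forall>j<length (g # gs). ?K ((g # gs) ! j)) \<and> (s \<noteq> (neg \<and> odd (length (g # gs))))))"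
        unfolding cfv_def by (rule refl)
      also have "\<dots> = ((?phi 0 \<or> (\<exists>i<?n. ?phi (Suc i))) \<or> (?K g \<and> (s \<noteq> (neg \<and> odd (Suc ?n)))))"
        unfolding all unfolding length_Cons Ex_less_Suc2 by simp
      also have "\<dots> = (?phi 0 \<or> (?K g \<and> (s \<noteq> (neg \<and> odd (Suc ?n)))))" using nphi by blast
      also have "\<dots> = ((\<not> ?K g \<and> (hd g \<noteq> (neg \<and> odd ?n))) \<or> (?K g \<and> (s \<noteq> (neg \<and> odd (Suc ?n)))))"
        using allK' by simp
      finally show ?thesis .
    qed
    have "(nxtS neg allK as s g \<noteq> (neg \<and> odd ?n)) = ((\<not> ?K g \<and> (hd g \<noteq> (neg \<and> odd ?n))) \<or> (?K g \<and> (s \<noteq> (neg \<and> odd (Suc ?n)))))"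
      by (cases "?K g"; cases s; cases neg) (auto simp: nxtS_def)
    then show ?thesis using l r by simp
  qed
  finally show ?case .
qed


lemma lexless_flat:
  "length kb = length as \<Longrightarrow> lexless kb as = (\<exists>t<length as. as ! t \<and> \<not> kb ! t \<and> (\<forall>u<t. kb ! u = as ! u))"
proof (induction as arbitrary: kb)
  case Nil then show ?case by simp
next
  case (Cons a as)
  then obtain x xs where kb: "kb = x # xs" "length xs = length as" by (cases kb) auto
  have e: "(\<exists>t<Suc (length as). (a#as)!t \<and> \<not> (x#xs)!t \<and> (\<forall>u<t. (x#xs)!u = (a#as)!u))
     = ((a \<and> \<not>x) \<or> (\<exists>t<length as. as!t \<and> \<not>xs!t \<and> x = a \<and> (\<forall>u<t. xs!u = as!u)))"
    by (simp only: Ex_less_Suc2 All_less_Suc2 nth_Cons_0 nth_Cons_Suc not_less0 simp_thms)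
  show ?case unfolding kb(1) length_Cons e lexless.simps Cons.IH[OF kb(2)] by blast
qed

definition litF :: "bool \<Rightarrow> nat \<Rightarrow> form" where
  "litF c i = (if c then FN (FV i) else FV i)"

definition KF :: "bool \<Rightarrow> bool list \<Rightarrow> nat \<Rightarrow> form" where
  "KF allK as z = (if allK then FA [] else
     FO (map (\<lambda>t. FA (FN (FV (Suc z + t)) # map (\<lambda>u. litF (\<not> as ! u) (Suc z + u)) [0..<t]))
       (filter (\<lambda>t. as ! t) [0..<length as])))"

definition termF :: "bool \<Rightarrow> bool \<Rightarrow> bool list \<Rightarrow> nat list \<Rightarrow> nat \<Rightarrow> form" where
  "termF neg allK as p i = FA ([FN (KF allK as (p ! i))] @ map (\<lambda>j. KF allK as (p ! j)) [Suc i..<length p]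
      @ [litF (neg \<and> odd (length p - 1 - i)) (p ! i)])"

definition rootF :: "bool \<Rightarrow> bool \<Rightarrow> bool list \<Rightarrow> nat list \<Rightarrow> form" where
  "rootF neg allK as p = FA (map (\<lambda>j. KF allK as (p ! j)) [0..<length p] @ [litF (neg \<and> odd (length p)) 0])"

definition leafF :: "bool \<Rightarrow> bool \<Rightarrow> bool list \<Rightarrow> nat list \<Rightarrow> form" where
  "leafF neg allK as p = FO (map (termF neg allK as p) [0..<length p] @ [rootF neg allK as p])"

lemma litF_eval: "feval (litF c i) xs = (xs ! i \<noteq> c)"
  by (auto simp: litF_def)

lemma ball_lt: "(\<forall>f\<in>{..<x}. P f) = (\<forall>f<(x::nat). P f)" by auto

lemma KF_eval:
  assumes "z + Suc (length as) \<le> length xs"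
  shows "feval (KF allK as (Suc z)) (s # xs) = Kv allK as (tl (grp (Suc (length as)) xs z))"
proof -
  define kb where "kb = take (length as) (drop (Suc z) xs)"
  define ys where "ys = s # xs"
  have tl: "tl (grp (Suc (length as)) xs z) = kb"
    by (simp add: grp_def kb_def tl_take tl_drop drop_Suc)
  have lkb: "length kb = length as" using assms by (simp add: kb_def)
  have nth: "\<And>t. t < length as \<Longrightarrow> ys ! (Suc (Suc z) + t) = kb ! t"
  proof -
    fix t assume t: "t < length as"
    have "ys ! (Suc (Suc z) + t) = xs ! (Suc z + t)" by (simp add: ys_def)
    also have "\<dots> = kb ! t" using t assms unfolding kb_def by (simp add: nth_take nth_drop)
    finally show "ys ! (Suc (Suc z) + t) = kb ! t" .
  qed
  have "feval (KF allK as (Suc z)) ys = (allK \<or> (\<exists>t<length as. as ! t \<and> \<not> kb ! t \<and> (\<forall>u<t. kb ! u = as ! u)))"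
  proof (cases allK)
    case True then show ?thesis by (simp add: KF_def)
  next
    case False
    have "feval (KF allK as (Suc z)) ys = (\<exists>t. t < length as \<and> as ! t \<and>
        \<not> ys ! (Suc (Suc z) + t) \<and> (\<forall>u<t. ys ! (Suc (Suc z) + u) \<noteq> (\<not> as ! u)))"
      using False unfolding KF_def by (simp add: litF_eval atLeast0LessThan ball_lt del: nth_Cons_Suc add: Bex_def)
    also have "\<dots> = (\<exists>t<length as. as ! t \<and> \<not> kb ! t \<and> (\<forall>u<t. kb ! u = as ! u))"
    proof (intro iffI)
      assume "\<exists>t. t < length as \<and> as ! t \<and> \<not> ys ! (Suc (Suc z) + t) \<and> (\<forall>u<t. ys ! (Suc (Suc z) + u) \<noteq> (\<not> as ! u))"
      then obtain t where t: "t < length as" "as ! t" "\<not> ys ! (Suc (Suc z) + t)" "\<forall>u<t. ys ! (Suc (Suc z) + u) \<noteq> (\<not> as ! u)" by blast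
      have "\<forall>u<t. kb ! u = as ! u"
      proof (intro allI impI)
        fix u assume "u < t"
        then show "kb ! u = as ! u" using t(4) nth[of u] t(1) by auto
      qed
      then show "\<exists>t<length as. as ! t \<and> \<not> kb ! t \<and> (\<forall>u<t. kb ! u = as ! u)" using t nth[of t] by auto
    next
      assume "\<exists>t<length as. as ! t \<and> \<not> kb ! t \<and> (\<forall>u<t. kb ! u = as ! u)"
      then obtain t where t: "t < length as" "as ! t" "\<not> kb ! t" "\<forall>u<t. kb ! u = as ! u" by blast
      have "\<forall>u<t. ys ! (Suc (Suc z) + u) \<noteq> (\<not> as ! u)"
      proof (intro allI impI)
        fix u assume "u < t"
        then show "ys ! (Suc (Suc z) + u) \<noteq> (\<not> as ! u)" using t(4) nth[of u] t(1) by auto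
      qed
      then show "\<exists>t. t < length as \<and> as ! t \<and> \<not> ys ! (Suc (Suc z) + t) \<and> (\<forall>u<t. ys ! (Suc (Suc z) + u) \<noteq> (\<not> as ! u))"
        using t nth[of t] by auto
    qed
    finally show ?thesis using False by simp
  qed
  then show ?thesis using lexless_flat[OF lkb] tl by (simp add: Kv_def ys_def)
qed




lemma leaf_eval:
  assumes ok: "\<forall>z\<in>set p. z + Suc (length as) \<le> length xs"
  shows "feval (leafF neg allK as (map Suc p)) (s # xs) = cfv neg allK as s (map (grp (Suc (length as)) xs) p)"
proof -
  define P where "P = map Suc p"
  define gs where "gs = map (grp (Suc (length as)) xs) p"
  define d where "d = length p"
  have lP: "length P = d" "length gs = d" by (auto simp: P_def gs_def d_def)
  have hK: "feval (KF allK as (P ! j)) (s # xs) = Kv allK as (tl (gs ! j))" if "j < d" for j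
    using KF_eval[of "p ! j" as xs allK s] ok that by (simp add: P_def gs_def d_def)
  have hH: "(s # xs) ! (P ! i) = hd (gs ! i)" if "i < d" for i
  proof -
    have "p ! i + Suc (length as) \<le> length xs" using ok that by (simp add: d_def)
    then have "p ! i < length xs" by simp
    then show ?thesis using that by (simp add: P_def gs_def d_def grp_def hd_drop_conv_nth)
  qed
  have t: "feval (termF neg allK as P i) (s # xs) = (\<not> Kv allK as (tl (gs ! i)) \<and> (\<forall>j. i < j \<and> j < d \<longrightarrow> Kv allK as (tl (gs ! j)))
        \<and> (hd (gs ! i) \<noteq> (neg \<and> odd (d - 1 - i))))" if "i < d" for i
    using that hK hH lP by (auto simp: termF_def litF_eval)
  have r: "feval (rootF neg allK as P) (s # xs) = ((\<forall>j<d. Kv allK as (tl (gs ! j))) \<and> (s \<noteq> (neg \<and> odd d)))"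
    using hK lP by (auto simp: rootF_def litF_eval)
  have "feval (leafF neg allK as P) (s # xs) = ((\<exists>i<d. feval (termF neg allK as P i) (s # xs)) \<or> feval (rootF neg allK as P) (s # xs))"
    using lP by (auto simp: leafF_def)
  also have "\<dots> = cfv neg allK as s gs"
    unfolding cfv_def r lP using t by (auto simp: lP)
  finally show ?thesis by (simp add: P_def gs_def)
qed

lemma fbd_mono: "fbd D f \<Longrightarrow> D \<le> D' \<Longrightarrow> fbd D' f"
proof (induction f arbitrary: D D')
  case (FV x) then show ?case by simp
next
  case (FN f) then show ?case by (cases D') auto
next
  case (FA fs) then show ?case by (cases D') (auto simp: le_diff_conv2)
next
  case (FO fs) then show ?case by (cases D') (auto simp: le_diff_conv2)
qed

lemma fbd_litF: "fbd 1 (litF c i)" by (simp add: litF_def)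

lemma fbd_KF: "fbd 3 (KF allK as z)"
  by (auto simp: KF_def litF_def)

lemma fbd_leaf: "fbd 6 (leafF neg allK as P)"
proof -
  have k: "fbd D (KF allK as z)" if "3 \<le> D" for D z using fbd_mono[OF fbd_KF that] .
  have l: "fbd D (litF c i)" if "1 \<le> D" for D c i using fbd_mono[OF fbd_litF that] .
  have "fbd 5 (termF neg allK as P i)" for i using k l by (auto simp: termF_def)
  moreover have "fbd 5 (rootF neg allK as P)" using k l by (auto simp: rootF_def)
  ultimately show ?thesis by (auto simp: leafF_def)
qed

lemma fok_KF: "z + Suc (length as) \<le> m \<Longrightarrow> fok m (KF allK as z)"
  by (auto simp: KF_def litF_def)

lemma fok_leaf:
  assumes "\<forall>z\<in>set P. z + Suc (length as) \<le> m" "0 < m"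
  shows "fok m (leafF neg allK as P)"
proof -
  have k: "fok m (KF allK as (P ! j))" if "j < length P" for j using fok_KF assms that by auto
  have l: "P ! j < m" if "j < length P" for j using assms that nth_mem by fastforce
  show ?thesis using k l assms(2) by (auto simp: leafF_def termF_def rootF_def litF_def)
qed

lemma sum_list_le: "(\<forall>x\<in>set xs. f x \<le> (M::nat)) \<Longrightarrow> sum_list (map f xs) \<le> length xs * M"
  by (induction xs) auto

lemma fsize_KF: "fsize (KF allK as z) \<le> (Suc (length as))\<^sup>2"
proof (cases allK)
  case True then show ?thesis by (simp add: KF_def)
next
  case False
  let ?n = "length as"
  have lit: "fsize (litF c i) \<le> 1" for c i by (simp add: litF_def)
  have inner: "fsize (FA (FN (FV (Suc z + t)) # map (\<lambda>u. litF (\<not> as ! u) (Suc z + u)) [0..<t])) \<le> Suc ?n"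
    if "t < ?n" for t
  proof -
    have "sum_list (map fsize (map (\<lambda>u. litF (\<not> as ! u) (Suc z + u)) [0..<t])) \<le> t * 1"
      unfolding map_map using sum_list_le[of "[0..<t]" "fsize \<circ> (\<lambda>u. litF (\<not> as ! u) (Suc z + u))" 1] lit by simp
    then show ?thesis using that by simp
  qed
  have "sum_list (map fsize (map (\<lambda>t. FA (FN (FV (Suc z + t)) # map (\<lambda>u. litF (\<not> as ! u) (Suc z + u)) [0..<t]))
      (filter (\<lambda>t. as ! t) [0..<?n]))) \<le> length (filter (\<lambda>t. as ! t) [0..<?n]) * Suc ?n"
    unfolding map_map by (rule sum_list_le) (use inner in auto)
  also have "\<dots> \<le> ?n * Suc ?n" by (intro mult_le_mono1) (metis length_filter_le length_upt minus_nat.diff_0)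
  finally show ?thesis using False by (simp add: KF_def power2_eq_square)
qed

lemma fsize_leaf:
  "fsize (leafF neg allK as P) \<le> 1 + (length P + 1) * (3 + (length P + 1) * (Suc (length as))\<^sup>2)"
proof -
  define S where "S = (Suc (length as))\<^sup>2"
  define d where "d = length P"
  have k: "fsize (KF allK as z) \<le> S" for z using fsize_KF by (simp add: S_def)
  have lit: "fsize (litF c i) \<le> 1" for c i by (simp add: litF_def)
  have ks: "sum_list (map fsize (map (\<lambda>j. KF allK as (P ! j)) js)) \<le> length js * S" for js
    unfolding map_map by (rule sum_list_le) (use k in auto)
  have t: "fsize (termF neg allK as P i) \<le> 3 + (d + 1) * S" for i
  proof -
    have a: "length [Suc i..<d] \<le> d" by simp
    have "fsize (termF neg allK as P i) = 2 + fsize (KF allK as (P ! i)) + sum_list (map fsize (map (\<lambda>j. KF allK as (P ! j)) [Suc i..<d]))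
        + fsize (litF (neg \<and> odd (d - 1 - i)) (P ! i))"
      by (simp add: termF_def d_def)
    also have "\<dots> \<le> 2 + S + d * S + 1"
      using k[of "P ! i"] ks[of "[Suc i..<d]"] lit[of "neg \<and> odd (d - 1 - i)" "P ! i"] a
      by (meson add_mono le_trans mult_le_mono1 order_refl)
    finally show ?thesis by simp
  qed
  have r: "fsize (rootF neg allK as P) \<le> 3 + (d + 1) * S"
  proof -
    have "fsize (rootF neg allK as P) = 1 + sum_list (map fsize (map (\<lambda>j. KF allK as (P ! j)) [0..<d]))
        + fsize (litF (neg \<and> odd d) 0)"
      by (simp add: rootF_def d_def)
    also have "\<dots> \<le> 1 + d * S + 1"
      using ks[of "[0..<d]"] lit[of "neg \<and> odd d" 0] by simp
    finally show ?thesis by simp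
  qed
  have "sum_list (map fsize (map (termF neg allK as P) [0..<d] @ [rootF neg allK as P])) \<le> length (map (termF neg allK as P) [0..<d] @ [rootF neg allK as P]) * (3 + (d + 1) * S)"
    by (rule sum_list_le) (use t r in auto)
  then show ?thesis by (simp add: leafF_def d_def S_def)
qed



definition Cfam :: "nat \<Rightarrow> bool \<Rightarrow> bool \<Rightarrow> bool list \<Rightarrow> nat \<Rightarrow> circuit" where
  "Cfam k neg allK as d = mkc (Suc (Lk k (Suc (length as)) d))
     (map (\<lambda>p. leafF neg allK as (map Suc p)) (paths k (Suc (length as)) d))"

lemma Lk_bound: "1 \<le> k \<Longrightarrow> Lk k w d \<le> w * d * k ^ d"
proof (induction d)
  case 0 then show ?case by simp
next
  case (Suc d)
  have "k ^ 1 \<le> k ^ Suc d" using Suc.prems by (intro power_increasing) auto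
  then have kk: "k \<le> k ^ Suc d" by simp
  have "Lk k w (Suc d) = k * w + k * Lk k w d" by (simp add: algebra_simps)
  also have "\<dots> \<le> w * k ^ Suc d + k * (w * d * k ^ d)"
    using Suc kk by (intro add_mono) (auto simp: mult.commute)
  also have "\<dots> = w * Suc d * k ^ Suc d" by (simp add: algebra_simps)
  finally show ?case .
qed

lemma d_le_pow: "2 \<le> k \<Longrightarrow> d \<le> k ^ d"
proof -
  assume k: "2 \<le> k"
  have "d < 2 ^ d" by (rule less_exp)
  also have "(2::nat) ^ d \<le> k ^ d" using k by (rule power_mono) simp
  finally show ?thesis by simp
qed

lemma Cfam_props:
  assumes k: "2 \<le> k"
  shows "wf_circuit (Cfam k neg allK as d)" "circ_depth (Cfam k neg allK as d) \<le> 6"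
    "circ_size (Cfam k neg allK as d) \<le> (8 + 5 * (Suc (length as))\<^sup>2) * (k ^ d) ^ 3"
    "output_dist (Cfam k neg allK as d) = broadcast_leaves k (thv neg allK as) d"
proof -
  define w where "w = Suc (length as)"
  define L where "L = Lk k w d"
  define fs where "fs = map (\<lambda>p. leafF neg allK as (map Suc p)) (paths k w d)"
  have C: "Cfam k neg allK as d = mkc (Suc L) fs" by (simp add: Cfam_def L_def fs_def w_def)
  have pok: "\<forall>z\<in>set p. z + w \<le> L" "length p = d" if "p \<in> set (paths k w d)" for p
    using paths_ok[OF that] by (auto simp: L_def)
  have ok: "\<forall>f\<in>set fs. fok (Suc L) f"
  proof
    fix f assume "f \<in> set fs"
    then obtain p where p: "p \<in> set (paths k w d)" "f = leafF neg allK as (map Suc p)" by (auto simp: fs_def)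
    show "fok (Suc L) f" unfolding p(2) using pok(1)[OF p(1)] by (intro fok_leaf) (auto simp: w_def)
  qed
  have bd: "\<forall>f\<in>set fs. fbd 6 f" using fbd_leaf by (auto simp: fs_def)
  note M = mkc_props[OF ok bd]
  show "wf_circuit (Cfam k neg allK as d)" "circ_depth (Cfam k neg allK as d) \<le> 6" using M C by auto
  define S where "S = (Suc (length as))\<^sup>2"
  define n where "n = k ^ d"
  have n1: "1 \<le> n" using k by (simp add: n_def)
  have dn: "d \<le> n" using d_le_pow[OF k] by (simp add: n_def)
  have wS: "w \<le> S" by (simp add: w_def S_def power2_eq_square)
  have Ln: "L \<le> S * n ^ 2"
  proof -
    have "L \<le> w * d * n" using Lk_bound[of k w d] k by (simp add: L_def n_def)
    also have "\<dots> \<le> S * n * n" using wS dn by (intro mult_le_mono) auto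
    finally show ?thesis by (simp add: power2_eq_square mult.assoc)
  qed
  have leaf: "fsize f \<le> 6 * n + 4 * S * n ^ 2 + 1" if "f \<in> set fs" for f
  proof -
    obtain p where p: "p \<in> set (paths k w d)" "f = leafF neg allK as (map Suc p)" using \<open>f \<in> set fs\<close> by (auto simp: fs_def)
    have "fsize f \<le> 1 + (d + 1) * (3 + (d + 1) * S)" using fsize_leaf[of neg allK as "map Suc p"] pok(2)[OF p(1)] p(2)
      by (simp add: S_def)
    also have "\<dots> \<le> 1 + (2 * n) * (3 + (2 * n) * S)" using dn n1 by (intro add_mono mult_le_mono) auto
    also have "\<dots> = 6 * n + 4 * S * n ^ 2 + 1" by (simp add: algebra_simps power2_eq_square)
    finally show ?thesis .
  qed
  have lfs: "length fs = n" by (simp add: fs_def length_paths n_def)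
  have "circ_size (Cfam k neg allK as d) = Suc L + sum_list (map fsize fs)" using M C by simp
  also have "\<dots> \<le> Suc (S * n ^ 2) + n * (6 * n + 4 * S * n ^ 2 + 1)"
    using Ln sum_list_le[of fs fsize "6 * n + 4 * S * n ^ 2 + 1"] leaf lfs by (intro add_mono) auto
  also have "\<dots> = 1 + n + 6 * n ^ 2 + S * n ^ 2 + 4 * S * n ^ 3" by (simp add: algebra_simps power2_eq_square power3_eq_cube)
  also have "\<dots> \<le> n ^ 3 + n ^ 3 + 6 * n ^ 3 + S * n ^ 3 + 4 * S * n ^ 3"
  proof -
    have a: "1 \<le> n ^ 3" using n1 by simp
    have b: "n \<le> n ^ 3" using n1 by (metis power_increasing power_one_right one_le_numeral)
    have c: "n ^ 2 \<le> n ^ 3" using n1 by (intro power_increasing) auto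
    show ?thesis using a b c by (intro add_mono mult_le_mono) auto
  qed
  also have "\<dots> = (8 + 5 * S) * n ^ 3" by (simp add: algebra_simps)
  finally show "circ_size (Cfam k neg allK as d) \<le> (8 + 5 * (Suc (length as))\<^sup>2) * (k ^ d) ^ 3"
    by (simp add: S_def n_def)
  have ev: "circ_eval (Cfam k neg allK as d) (s # ys) = gen k neg allK as d s ys" if "length ys = L" for s ys
  proof -
    have "circ_eval (Cfam k neg allK as d) (s # ys) = map (\<lambda>f. feval f (s # ys)) fs" using M(4)[of "s # ys"] C that by simp
    also have "\<dots> = map (\<lambda>p. cfv neg allK as s (map (grp w ys) p)) (paths k w d)"
      unfolding fs_def map_map o_def
    proof (rule map_cong[OF refl])
      fix p assume "p \<in> set (paths k w d)"
      then have "\<forall>z\<in>set p. z + Suc (length as) \<le> length ys" using pok that by (simp add: w_def)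
      then show "feval (leafF neg allK as (map Suc p)) (s # ys) = cfv neg allK as s (map (grp w ys) p)"
        using leaf_eval by (simp add: w_def)
    qed
    also have "\<dots> = gen k neg allK as d s ys" by (simp add: gen_def fval_cfv w_def)
    finally show ?thesis .
  qed
  have "output_dist (Cfam k neg allK as d) = map_pmf (circ_eval (Cfam k neg allK as d)) (replicate_pmf (Suc L) coin)"
    using M C by (simp add: output_dist_def uniform_rep mkc_def)
  also have "\<dots> = bind_pmf coin (\<lambda>s. map_pmf (\<lambda>ys. circ_eval (Cfam k neg allK as d) (s # ys)) (replicate_pmf L coin))"
    unfolding rep_Suc_map map_bind_pmf pmf.map_comp o_def by simp
  also have "\<dots> = bind_pmf coin (\<lambda>s. map_pmf (gen k neg allK as d s) (replicate_pmf L coin))"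
    by (intro bind_pmf_cong refl map_pmf_cong) (auto simp: set_rep_coin ev)
  also have "\<dots> = broadcast_leaves k (thv neg allK as) d"
    unfolding broadcast_leaves_def L_def w_def gen_dist ..
  finally show "output_dist (Cfam k neg allK as d) = broadcast_leaves k (thv neg allK as) d" .
qed



lemma bits_exist: "A < 2 ^ b \<Longrightarrow> \<exists>as. length as = b \<and> bval as = A"
proof (induction b arbitrary: A)
  case 0 then show ?case by simp
next
  case (Suc b)
  show ?case
  proof (cases "A < 2 ^ b")
    case True
    then obtain as where "length as = b" "bval as = A" using Suc.IH by blast
    then show ?thesis by (intro exI[of _ "False # as"]) simp
  next
    case False
    then have "A - 2 ^ b < 2 ^ b" using Suc.prems by simp
    then obtain as where "length as = b" "bval as = A - 2 ^ b" using Suc.IH by blast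
    then show ?thesis using False by (intro exI[of _ "True # as"]) simp
  qed
qed

lemma close_bl:
  assumes "-1 \<le> t1" "t1 \<le> 1" "-1 \<le> t2" "t2 \<le> 1"
  shows "close (eb k (\<bar>t1 - t2\<bar> / 2) d) (broadcast_leaves k t1 d) (broadcast_leaves k t2 d)"
  unfolding broadcast_leaves_def by (intro close_bind close_bcast assms)

lemma thv_bounds: "-1 \<le> thv neg allK as" "thv neg allK as \<le> 1"
  using qv_bounds[of allK as] by (auto simp: thv_def)

lemma part1:
  fixes a :: int and b :: nat
  assumes k: "2 \<le> k" and th: "-1 \<le> \<theta>" "\<theta> \<le> 1" and ab: "\<theta> = a / 2 ^ b"
  shows "\<exists>C. AC0_family k C \<and> (\<forall>d. output_dist (C d) = broadcast_leaves k \<theta> d)"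
proof -
  define A where "A = nat \<bar>a\<bar>"
  define neg where "neg = (a < 0)"
  have pb: "(0::real) < 2 ^ b" by simp
  have "- (2 ^ b) \<le> real_of_int a" using th(1) pb unfolding ab by (simp add: field_simps)
  moreover have "real_of_int a \<le> 2 ^ b" using th(2) pb unfolding ab by (simp add: field_simps)
  ultimately have "real_of_int \<bar>a\<bar> \<le> 2 ^ b" unfolding of_int_abs abs_le_iff by linarith
  then have Ale: "A \<le> 2 ^ b" unfolding A_def
    by (metis (mono_tags, opaque_lifting) abs_ge_zero nat_le_iff of_int_le_iff of_int_numeral of_int_power of_nat_numeral of_nat_power)
  have Areal: "real A = \<bar>a\<bar>" by (simp add: A_def)
  obtain allK as where par: "thv neg allK as = \<theta>"
  proof (cases "A = 2 ^ b")
    case True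
    then have "\<bar>real_of_int a\<bar> = 2 ^ b" using Areal by simp
    then have e: "real_of_int a = (if a < 0 then - (2 ^ b) else 2 ^ b)" by (auto simp: abs_if split: if_splits)
    have "thv neg True [] = \<theta>" unfolding thv_def qv_def neg_def ab e using pb by simp
    then show ?thesis using that by blast
  next
    case False
    then have "A < 2 ^ b" using Ale by simp
    then obtain as where as: "length as = b" "bval as = A" using bits_exist by blast
    have "thv neg False as = \<theta>" using ab as Areal unfolding thv_def qv_def neg_def
      by (cases "a < 0") (auto simp: abs_if)
    then show ?thesis using that by blast
  qed
  define C where "C = Cfam k neg allK as"
  have "AC0_family k C" unfolding AC0_family_def C_def
    using Cfam_props(1-3)[OF k, of neg allK as] by blast
  moreover have "\<forall>d. output_dist (C d) = broadcast_leaves k \<theta> d"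
    using Cfam_props(4)[OF k] par by (simp add: C_def)
  ultimately show ?thesis by blast
qed



lemma approx_A:
  fixes y :: real
  assumes y: "0 \<le> y" "y \<le> 1" and A: "A = min (2 ^ m - 1) (nat \<lfloor>y * 2 ^ m\<rfloor>)"
  shows "\<bar>y - real A / 2 ^ m\<bar> \<le> 1 / 2 ^ m" "A < 2 ^ m"
proof -
  define x where "x = y * 2 ^ m"
  have pm: "(0::real) < 2 ^ m" by simp
  have x0: "0 \<le> x" "x \<le> 2 ^ m" using y by (auto simp: x_def)
  have fl: "real (nat \<lfloor>x\<rfloor>) \<le> x" "x < real (nat \<lfloor>x\<rfloor>) + 1" using x0
    by (auto simp: of_nat_nat)
  have "real A \<le> x \<and> x - real A \<le> 1"
  proof (cases "nat \<lfloor>x\<rfloor> \<le> 2 ^ m - 1")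
    case True
    then have "A = nat \<lfloor>x\<rfloor>" using A by (simp add: x_def)
    then show ?thesis using fl unfolding \<open>A = nat \<lfloor>x\<rfloor>\<close> by linarith
  next
    case False
    then have a: "A = 2 ^ m - 1" using A by (simp add: x_def)
    have "(1::nat) \<le> 2 ^ m" by simp
    then have "real A = 2 ^ m - 1" using a by (simp add: of_nat_diff)
    have "A < nat \<lfloor>x\<rfloor>" using False a by simp
    then have "real A < real (nat \<lfloor>x\<rfloor>)" by (simp only: of_nat_less_iff)
    with \<open>real A = 2 ^ m - 1\<close> fl x0 show ?thesis by linarith
  qed
  then have "\<bar>x - real A\<bar> \<le> 1" by simp
  then have "\<bar>x - real A\<bar> / 2 ^ m \<le> 1 / 2 ^ m" using pm by (simp add: divide_right_mono)
  moreover have "\<bar>x - real A\<bar> / 2 ^ m = \<bar>y - real A / 2 ^ m\<bar>"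
  proof -
    have eq: "y - real A / 2 ^ m = (x - real A) / 2 ^ m" using pm by (simp add: x_def field_simps)
    show ?thesis unfolding eq abs_divide by simp
  qed
  ultimately show "\<bar>y - real A / 2 ^ m\<bar> \<le> 1 / 2 ^ m" by simp
  have "A \<le> 2 ^ m - 1" using A by simp
  moreover have "2 ^ m - 1 < (2::nat) ^ m" by simp
  ultimately show "A < 2 ^ m" by (rule le_less_trans)
qed

lemma nat_ceil_le: "r \<le> real N \<Longrightarrow> nat \<lceil>r\<rceil> \<le> N"
  by (simp add: ceiling_le_iff nat_le_iff)

lemma part2:
  assumes k: "2 \<le> k" and th: "-1 \<le> \<theta>" "\<theta> \<le> 1" and c: "0 < c"
  shows "\<exists>C. AC0_family k C \<and>
           (\<forall>d. tv_dist (output_dist (C d)) (broadcast_leaves k \<theta> d) \<le> 2 powr (- (real (k ^ d) powr c)))"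
proof -
  define ce where "ce = nat \<lceil>c\<rceil>"
  define bb where "bb d = nat \<lceil>real (k ^ d) powr c\<rceil> + 2 * k ^ d" for d
  define AA where "AA d = min (2 ^ bb d - 1) (nat \<lfloor>\<bar>\<theta>\<bar> * 2 ^ bb d\<rfloor>)" for d
  define AS where "AS d = (SOME as. length as = bb d \<and> bval as = AA d)" for d
  define neg where "neg = (\<theta> < 0)"
  define C where "C d = Cfam k neg False (AS d) d" for d
  have thabs: "0 \<le> \<bar>\<theta>\<bar>" "\<bar>\<theta>\<bar> \<le> 1" using th by auto
  have AS: "length (AS d) = bb d \<and> bval (AS d) = AA d" for d
  proof -
    have "AA d < 2 ^ bb d" using approx_A(2)[OF thabs AA_def] .
    then have "\<exists>as. length as = bb d \<and> bval as = AA d" by (rule bits_exist)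
    then show ?thesis unfolding AS_def by (rule someI_ex)
  qed
  have err: "\<bar>thv neg False (AS d) - \<theta>\<bar> \<le> 1 / 2 ^ bb d" for d
  proof -
    have q: "thv neg False (AS d) = (if neg then - (real (AA d) / 2 ^ bb d) else real (AA d) / 2 ^ bb d)"
      using AS[of d] by (simp add: thv_def qv_def)
    have "\<bar>\<bar>\<theta>\<bar> - real (AA d) / 2 ^ bb d\<bar> \<le> 1 / 2 ^ bb d" using approx_A(1)[OF thabs AA_def] .
    then show ?thesis unfolding q unfolding neg_def by (auto simp: abs_if split: if_splits)
  qed
  have size: "circ_size (C d) \<le> 88 * (k ^ d) ^ (2 * ce + 3)" for d
  proof -
    define n where "n = k ^ d"
    have n1: "1 \<le> n" using k by (simp add: n_def)
    have "0 < \<lceil>c\<rceil>" using c by simp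
    then have ce1: "1 \<le> ce" by (simp add: ce_def Suc_le_eq)
    have "real ce = real_of_int \<lceil>c\<rceil>" using \<open>0 < \<lceil>c\<rceil>\<close> by (simp add: ce_def)
    then have cce: "c \<le> real ce" using le_of_int_ceiling[of c] by simp
    have "real n powr c \<le> real n powr real ce" using n1 cce by (intro powr_mono) auto
    also have "\<dots> = real (n ^ ce)" using n1 by (simp add: powr_realpow)
    finally have "nat \<lceil>real n powr c\<rceil> \<le> n ^ ce" by (rule nat_ceil_le)
    moreover have "n \<le> n ^ ce" using n1 ce1 by (metis power_increasing power_one_right)
    moreover have "1 \<le> n ^ ce" using n1 by simp
    moreover have "bb d = nat \<lceil>real n powr c\<rceil> + 2 * n" by (simp add: bb_def n_def)
    ultimately have b4: "Suc (bb d) \<le> 4 * n ^ ce" by linarith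
    have "(Suc (bb d))\<^sup>2 \<le> (4 * n ^ ce)\<^sup>2" using b4 by (rule power_mono) simp
    also have "\<dots> = 16 * n ^ (2 * ce)" by (simp add: power_mult_distrib power_mult[symmetric] mult.commute)
    finally have sq: "(Suc (bb d))\<^sup>2 \<le> 16 * n ^ (2 * ce)" .
    have "circ_size (C d) \<le> (8 + 5 * (Suc (bb d))\<^sup>2) * n ^ 3"
      using Cfam_props(3)[OF k, of neg False "AS d" d] AS[of d] by (simp add: C_def n_def)
    also have "\<dots> \<le> (8 * n ^ (2 * ce) + 5 * (16 * n ^ (2 * ce))) * n ^ 3"
      using sq n1 by (intro mult_le_mono1 add_mono) auto
    also have "\<dots> = 88 * n ^ (2 * ce + 3)" by (simp add: algebra_simps power_add)
    finally show ?thesis by (simp add: n_def)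
  qed
  have "\<forall>d. wf_circuit (C d) \<and> circ_depth (C d) \<le> 6 \<and> circ_size (C d) \<le> 88 * (k ^ d) ^ (2 * ce + 3)"
    using Cfam_props(1,2)[OF k] size by (simp add: C_def)
  then have "AC0_family k C" unfolding AC0_family_def by blast
  moreover have "tv_dist (output_dist (C d)) (broadcast_leaves k \<theta> d) \<le> 2 powr (- (real (k ^ d) powr c))" for d
  proof -
    define n where "n = k ^ d"
    define t where "t = thv neg False (AS d)"
    define x where "x = real n powr c"
    have n1: "1 \<le> n" using k by (simp add: n_def)
    have out: "output_dist (C d) = broadcast_leaves k t d" using Cfam_props(4)[OF k] by (simp add: C_def t_def)
    have cl: "close (eb k (\<bar>t - \<theta>\<bar> / 2) d) (broadcast_leaves k t d) (broadcast_leaves k \<theta> d)"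
      using thv_bounds th by (intro close_bl) (auto simp: t_def)
    have pb: "(0::real) < 2 ^ bb d" by simp
    have "eb k (\<bar>t - \<theta>\<bar> / 2) d \<le> \<bar>t - \<theta>\<bar> / 2 * real d * real k ^ d"
      using k by (intro eb_bound) auto
    also have "\<dots> \<le> (1 / 2 ^ bb d) * real n * real n"
    proof -
      have "\<bar>t - \<theta>\<bar> / 2 \<le> 1 / 2 ^ bb d" using err[of d] pb unfolding t_def by (simp add: field_simps)
      moreover have "real d \<le> real n" using d_le_pow[OF k] by (simp add: n_def)
      ultimately show ?thesis by (intro mult_mono) (auto simp: n_def)
    qed
    also have "\<dots> \<le> 2 powr (- x)"
    proof -
      have "n < 2 ^ n" by (rule less_exp)
      then have "real n \<le> 2 powr real n" by (simp add: powr_realpow)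
      then have "real n * real n \<le> 2 powr real n * 2 powr real n" by (intro mult_mono) auto
      also have "\<dots> = 2 powr (2 * real n)" by (simp add: powr_add[symmetric])
      finally have nn: "real n * real n \<le> 2 powr (2 * real n)" .
      have bbx: "x + 2 * real n \<le> real (bb d)" unfolding bb_def x_def n_def
        by (simp add: of_nat_nat)
      have "(1 / 2 ^ bb d) * real n * real n = (real n * real n) / 2 powr real (bb d)"
        by (simp add: powr_realpow)
      also have "\<dots> \<le> 2 powr (2 * real n) / 2 powr real (bb d)" using nn by (intro divide_right_mono) auto
      also have "\<dots> = 2 powr (2 * real n - real (bb d))" by (simp add: powr_diff)
      also have "\<dots> \<le> 2 powr (- x)" using bbx by (intro powr_mono) auto
      finally show ?thesis .
    qed
    finally have "eb k (\<bar>t - \<theta>\<bar> / 2) d \<le> 2 powr (- x)" .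
    then show ?thesis using close_tv[OF cl] out by (simp add: x_def n_def)
  qed
  ultimately show ?thesis by blast
qed


theorem mainTheorem5:
  fixes k :: nat and \<theta> :: real
  assumes "k \<ge> 2" and "-1 \<le> \<theta>" and "\<theta> \<le> 1"
  shows "((\<exists>a::int. \<exists>b::nat. \<theta> = a / 2 ^ b) \<longrightarrow>
            (\<exists>C. AC0_family k C \<and> (\<forall>d. output_dist (C d) = broadcast_leaves k \<theta> d)))
       \<and> (\<forall>c::real. c > 0 \<longrightarrow>
            (\<exists>C. AC0_family k C \<and>
               (\<forall>d. tv_dist (output_dist (C d)) (broadcast_leaves k \<theta> d)
                      \<le> 2 powr (- (real (k ^ d) powr c)))))"
  using part1[OF assms] part2[OF assms] by blast

end
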